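(* Let $\mathcal{P}=[0,1]^n\cap K$ be a polytope, where $K$ is an affine subspace of $\mathbb{R}^n$. Then there exists a combinatorial Bernoulli factory for $\mathcal{P}$ which terminates almost surely everywhere on $\mathcal{P}$, including on the boundary of $[0,1]^n$.
   Context: A (multiparameter) Bernoulli factory with input $(p_1,\dots,p_n)$ is a (possibly infinite) rooted binary tree in which every node has either $2$ children or $0$ children (leaf). Each internal node is labelled either by an index $i\in[n]$ or by a constant $c\in(0,1)$; each leaf is labelled $0$ or $1$. To execute it with coins $p\in[0,1]^n$, start at the root; at a node labelled $i$ draw a fresh independent Bernoulli($p_i$) sample, at a node labelled $c$ a fresh independent Bernoulli($c$) sample; move to the child corresponding to the outcome; upon reaching a leaf output its label. It implements $f:\mathcal{P}\to[0,1]$ if for every $p\in\mathcal{P}$ it reaches a leaf almost surely and outputs $1$ with probability exactly $f(p)$. A combinatorial Bernoulli factory for $\mathcal{P}$, with vertex set $V(\mathcal{P})$, is a collection of $|V(\mathcal{P})|$ multiparameter Bernoulli factories implementing functions $f_v:\mathcal{P}\to[0,1]$, $v\in V(\mathcal{P})$, such that for all $p\in\mathcal{P}$: $\sum_{v\in V(\mathcal{P})}f_v(p)=1$ and $\sum_{v\in V(\mathcal{P})}v\,f_v(p)=p$ (so that it can be used to sample a random vertex $v$ with $\mathbb{E}_p[v]=p$). *)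

theory Defs
  imports "HOL-Analysis.Analysis"
begin

datatype 'i bf_node = Coin 'i | Const real | Leaf bool

text \<open>A (possibly infinite) rooted binary tree is given by the labels of all
  finite addresses (root = [], child for outcome b of node w = w @ [b]).
  The actual nodes of the tree are the addresses all of whose proper prefixes
  are internal; so every node has 2 children (internal) or 0 children (leaf).\<close>
type_synonym 'i bf_tree = "bool list \<Rightarrow> 'i bf_node"

definition is_internal :: "'i bf_node \<Rightarrow> bool" where
  "is_internal x \<longleftrightarrow> (\<forall>b. x \<noteq> Leaf b)"

definition reached :: "'i bf_tree \<Rightarrow> bool list \<Rightarrow> bool" where
  "reached t w \<longleftrightarrow> (\<forall>j<length w. is_internal (t (take j w)))"

definition leaf_paths :: "'i bf_tree \<Rightarrow> bool \<Rightarrow> bool list set" where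
  "leaf_paths t b = {w. reached t w \<and> t w = Leaf b}"

fun coin_prob :: "real ^ 'n \<Rightarrow> 'n bf_node \<Rightarrow> real" where
  "coin_prob p (Coin i) = p $ i"
| "coin_prob p (Const c) = c"
| "coin_prob p (Leaf b) = 0"

definition path_prob :: "'n bf_tree \<Rightarrow> real ^ 'n \<Rightarrow> bool list \<Rightarrow> real" where
  "path_prob t p w =
     (\<Prod>j<length w. (let q = coin_prob p (t (take j w)) in if w ! j then q else 1 - q))"

definition wf_factory :: "'n bf_tree \<Rightarrow> bool" where
  "wf_factory t \<longleftrightarrow> (\<forall>w c. reached t w \<and> t w = Const c \<longrightarrow> 0 < c \<and> c < 1)"

text \<open>t implements f on P: for every p in P it reaches a leaf almost surely
  and outputs 1 with probability exactly f p.\<close>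
definition implements :: "'n bf_tree \<Rightarrow> (real ^ 'n \<Rightarrow> real) \<Rightarrow> (real ^ 'n) set \<Rightarrow> bool" where
  "implements t f P \<longleftrightarrow>
     (\<forall>p\<in>P. (path_prob t p has_sum 1) (leaf_paths t True \<union> leaf_paths t False)
          \<and> (path_prob t p has_sum f p) (leaf_paths t True))"

definition vertices :: "(real ^ 'n) set \<Rightarrow> (real ^ 'n) set" where
  "vertices P = {v. v extreme_point_of P}"

definition comb_factory :: "(real ^ 'n) set \<Rightarrow> (real ^ 'n \<Rightarrow> 'n bf_tree) \<Rightarrow> bool" where
  "comb_factory P T \<longleftrightarrow>
     (\<exists>f :: real ^ 'n \<Rightarrow> real ^ 'n \<Rightarrow> real.
        (\<forall>v\<in>vertices P. wf_factory (T v) \<and> implements (T v) (f v) P)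
      \<and> (\<forall>p\<in>P. (\<Sum>v\<in>vertices P. f v p) = 1 \<and> (\<Sum>v\<in>vertices P. f v p *\<^sub>R v) = p))"

end

theory Submission
  imports Defs
begin

datatype ('n,'a) gn = GC 'n | GK real | GL 'a

type_synonym ('n,'a) gt = "bool list \<Rightarrow> ('n,'a) gn"

definition gint :: "('n,'a) gn \<Rightarrow> bool" where "gint x \<longleftrightarrow> (\<forall>a. x \<noteq> GL a)"

lemma gint_simps[simp]: "gint (GC i)" "gint (GK c)" "\<not> gint (GL a)" by (auto simp: gint_def)

definition greached :: "('n,'a) gt \<Rightarrow> bool list \<Rightarrow> bool" where
  "greached t w \<longleftrightarrow> (\<forall>j<length w. gint (t (take j w)))"
definition gleaves :: "('n,'a) gt \<Rightarrow> bool list set" where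
  "gleaves t = {w. greached t w \<and> \<not> gint (t w)}"
definition glv :: "('n,'a) gt \<Rightarrow> 'a \<Rightarrow> bool list set" where
  "glv t a = {w. greached t w \<and> t w = GL a}"
definition glab :: "('n,'a) gt \<Rightarrow> bool list \<Rightarrow> 'a" where
  "glab t w = (case t w of GL a \<Rightarrow> a | _ \<Rightarrow> undefined)"

fun gcp :: "real ^ 'n \<Rightarrow> ('n,'a) gn \<Rightarrow> real" where
  "gcp p (GC i) = p $ i" | "gcp p (GK c) = c" | "gcp p (GL a) = 0"

definition gpp :: "('n,'a) gt \<Rightarrow> real ^ 'n \<Rightarrow> bool list \<Rightarrow> real" where
  "gpp t p w = (\<Prod>j<length w. (let q = gcp p (t (take j w)) in if w ! j then q else 1 - q))"

definition gwf :: "('n,'a) gt \<Rightarrow> bool" where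
  "gwf t \<longleftrightarrow> (\<forall>w c. greached t w \<and> t w = GK c \<longrightarrow> 0 < c \<and> c < 1)"

definition incube :: "real ^ 'n \<Rightarrow> bool" where "incube p \<longleftrightarrow> (\<forall>i. 0 \<le> p $ i \<and> p $ i \<le> 1)"

definition realizes :: "('n,'a) gt \<Rightarrow> real ^ 'n \<Rightarrow> 'a set \<Rightarrow> ('a \<Rightarrow> real) \<Rightarrow> bool" where
  "realizes t p S D \<longleftrightarrow> finite S \<and> (\<forall>a. a \<notin> S \<longrightarrow> D a = 0) \<and> (gpp t p has_sum 1) (gleaves t)
      \<and> (\<forall>a. (gpp t p has_sum D a) (glv t a))"

lemma greached_take: "greached t w \<Longrightarrow> greached t (take j w)"
  unfolding greached_def by (auto simp: min_def)

lemma glv_sub: "glv t a \<subseteq> gleaves t"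
  unfolding glv_def gleaves_def by auto

lemma glv_subD: "w \<in> glv t a \<Longrightarrow> w \<in> gleaves t"
  unfolding glv_def gleaves_def by auto

lemma gleaves_glv: "w \<in> gleaves t \<Longrightarrow> w \<in> glv t (glab t w)"
  unfolding glv_def gleaves_def glab_def gint_def by auto

lemma glv_glab: "w \<in> glv t a \<Longrightarrow> glab t w = a"
  unfolding glv_def glab_def by auto

lemma gleaves_prefix:
  assumes "w \<in> gleaves t" "w' \<in> gleaves t" "take (length w) w' = w"
  shows "w' = w"
proof (cases "length w < length w'")
  case True
  then have "gint (t (take (length w) w'))" using assms(2) unfolding gleaves_def greached_def by auto
  then show ?thesis using assms(1,3) unfolding gleaves_def by auto
next
  case False
  then show ?thesis using assms(3) by simp
qed

lemma gleaves_append_eq: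
  assumes "w0 \<in> gleaves t" "w0' \<in> gleaves t" "w0 @ w1 = w0' @ w1'"
  shows "w0 = w0' \<and> w1 = w1'"
proof -
  have "w0 = w0'"
  proof (cases "length w0 \<le> length w0'")
    case True
    have "take (length w0) w0' = w0" using assms(3) True
      by (metis append_eq_append_conv_if take_all_iff)
    then show ?thesis using gleaves_prefix[OF assms(1,2)] by simp
  next
    case False
    have "take (length w0') w0 = w0'" using assms(3) False
      by (metis append_eq_append_conv_if nat_le_linear take_all_iff)
    then show ?thesis using gleaves_prefix[OF assms(2,1)] by simp
  qed
  then show ?thesis using assms(3) by simp
qed

lemma gpp_nonneg:
  assumes "incube p" "gwf t" "greached t w"
  shows "0 \<le> gpp t p w"
  unfolding gpp_def
proof (rule prod_nonneg, clarify)
  fix j assume j: "j < length w"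
  define x where "x = t (take j w)"
  have rx: "greached t (take j w)" using greached_take[OF assms(3)] .
  have "0 \<le> gcp p x \<and> gcp p x \<le> 1"
  proof (cases x)
    case (GC i) then show ?thesis using assms(1) by (auto simp: incube_def)
  next
    case (GK c)
    then have "t (take j w) = GK c" using x_def by simp
    moreover have "0 < c \<and> c < 1" using assms(2) rx \<open>t (take j w) = GK c\<close> unfolding gwf_def by blast
    ultimately show ?thesis using GK by simp
  next
    case (GL a) then show ?thesis by simp
  qed
  then show "0 \<le> (let q = gcp p (t (take j w)) in if w ! j then q else 1 - q)"
    by (auto simp: x_def Let_def)
qed

lemma prod_lessThan_add:
  "(\<Prod>j<m+n. f j) = (\<Prod>j<m. f j) * (\<Prod>k<n. f (m+k))" for f :: "nat \<Rightarrow> real"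
  by (induction n) (auto simp: mult.assoc)

lemma gpp_append:
  "gpp t p (w0 @ w1) = gpp t p w0 *
     (\<Prod>k<length w1. (let q = gcp p (t (w0 @ take k w1)) in if w1 ! k then q else 1 - q))"
proof -
  have "gpp t p (w0 @ w1) = (\<Prod>j<length w0 + length w1.
         (let q = gcp p (t (take j (w0 @ w1))) in if (w0 @ w1) ! j then q else 1 - q))"
    by (simp add: gpp_def)
  also have "\<dots> = gpp t p w0 *
     (\<Prod>k<length w1. (let q = gcp p (t (w0 @ take k w1)) in if w1 ! k then q else 1 - q))"
    unfolding prod_lessThan_add gpp_def
    by (intro arg_cong2[where f="(*)"] prod.cong) (auto simp: nth_append)
  finally show ?thesis .
qed

definition gleaf :: "'a \<Rightarrow> ('n,'a) gt" where "gleaf a = (\<lambda>w. GL a)"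

lemma gleaves_gleaf[simp]: "gleaves (gleaf a) = {[]}"
  unfolding gleaves_def gleaf_def greached_def
  by (auto simp: gint_def)

lemma glv_gleaf: "glv (gleaf a) b = (if a = b then {[]} else {})"
  unfolding glv_def gleaf_def greached_def
  by (auto simp: gint_def)

lemma gwf_gleaf[simp]: "gwf (gleaf a)" by (simp add: gwf_def gleaf_def)

lemma realizes_gleaf: "realizes (gleaf a) p {a} (\<lambda>b. if b = a then 1 else 0)"
  unfolding realizes_def glv_gleaf
  by (auto simp: has_sum_finite_iff gpp_def)

definition gnode :: "('n,'a) gn \<Rightarrow> ('n,'a) gt \<Rightarrow> ('n,'a) gt \<Rightarrow> ('n,'a) gt" where
  "gnode x t0 t1 = (\<lambda>w. case w of [] \<Rightarrow> x | b # w' \<Rightarrow> (if b then t1 w' else t0 w'))"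

lemma gnode_Nil[simp]: "gnode x t0 t1 [] = x" and
  gnode_Cons[simp]: "gnode x t0 t1 (b # w) = (if b then t1 w else t0 w)"
  by (simp_all add: gnode_def)

lemma greached_gnode_Cons:
  "greached (gnode x t0 t1) (b # w) \<longleftrightarrow> gint x \<and> greached (if b then t1 else t0) w"
  unfolding greached_def
  by (auto simp: less_Suc_eq_0_disj)

lemma greached_Nil[simp]: "greached t []" by (simp add: greached_def)

lemma gpp_Nil[simp]: "gpp t p [] = 1" by (simp add: gpp_def)

lemma gpp_gnode_Cons:
  "gpp (gnode x t0 t1) p (b # w) = (if b then gcp p x else 1 - gcp p x) * gpp (if b then t1 else t0) p w"
  unfolding gpp_def length_Cons prod.lessThan_Suc_shift by (cases b) (simp_all add: Let_def)

lemma gleaves_gnode: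
  assumes "gint x"
  shows "gleaves (gnode x t0 t1) = Cons False ` gleaves t0 \<union> Cons True ` gleaves t1"
proof -
  have "w \<in> gleaves (gnode x t0 t1) \<longleftrightarrow> w \<in> Cons False ` gleaves t0 \<union> Cons True ` gleaves t1" for w
    using assms by (cases w) (auto simp: gleaves_def greached_gnode_Cons)
  then show ?thesis by blast
qed

lemma glv_gnode:
  assumes "gint x"
  shows "glv (gnode x t0 t1) a = Cons False ` glv t0 a \<union> Cons True ` glv t1 a"
proof -
  have "w \<in> glv (gnode x t0 t1) a \<longleftrightarrow> w \<in> Cons False ` glv t0 a \<union> Cons True ` glv t1 a" for w
    using assms by (cases w) (auto simp: glv_def greached_gnode_Cons)
  then show ?thesis by blast
qed

lemma gwf_gnode:
  assumes "\<And>c. x = GK c \<Longrightarrow> 0 < c \<and> c < 1" "gwf t0" "gwf t1"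
  shows "gwf (gnode x t0 t1)"
  unfolding gwf_def
proof (intro allI impI)
  fix w c assume h: "greached (gnode x t0 t1) w \<and> gnode x t0 t1 w = GK c"
  show "0 < c \<and> c < 1"
  proof (cases w)
    case Nil then show ?thesis using h assms(1) by simp
  next
    case (Cons b w')
    then show ?thesis using h assms(2,3) by (auto simp: greached_gnode_Cons gwf_def split: if_splits)
  qed
qed

lemma has_sum_Cons_image:
  "(f has_sum s) (Cons b ` A) \<longleftrightarrow> ((\<lambda>w. f (b # w)) has_sum s) A"
  by (subst has_sum_reindex) (auto simp: o_def)

lemma has_sum_gnode:
  assumes "gint x" "(gpp t0 p has_sum s0) A0" "(gpp t1 p has_sum s1) A1"
  shows "(gpp (gnode x t0 t1) p has_sum ((1 - gcp p x) * s0 + gcp p x * s1)) (Cons False ` A0 \<union> Cons True ` A1)"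
proof (rule has_sum_Un_disjoint)
  show "(gpp (gnode x t0 t1) p has_sum (1 - gcp p x) * s0) (Cons False ` A0)"
    unfolding has_sum_Cons_image gpp_gnode_Cons using has_sum_cmult_right[OF assms(2)] by simp
  show "(gpp (gnode x t0 t1) p has_sum gcp p x * s1) (Cons True ` A1)"
    unfolding has_sum_Cons_image gpp_gnode_Cons using has_sum_cmult_right[OF assms(3)] by simp
qed auto

lemma realizes_gnode:
  assumes "gint x" "realizes t0 p S0 D0" "realizes t1 p S1 D1"
  shows "realizes (gnode x t0 t1) p (S0 \<union> S1) (\<lambda>a. (1 - gcp p x) * D0 a + gcp p x * D1 a)"
proof -
  have "(gpp (gnode x t0 t1) p has_sum (1 - gcp p x) * 1 + gcp p x * 1) (gleaves (gnode x t0 t1))"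
    unfolding gleaves_gnode[OF assms(1)]
    by (rule has_sum_gnode[OF assms(1)]) (use assms(2,3) in \<open>auto simp: realizes_def\<close>)
  moreover have "(gpp (gnode x t0 t1) p has_sum (1 - gcp p x) * D0 a + gcp p x * D1 a) (glv (gnode x t0 t1) a)" for a
    unfolding glv_gnode[OF assms(1)]
    by (rule has_sum_gnode[OF assms(1)]) (use assms(2,3) in \<open>auto simp: realizes_def\<close>)
  ultimately show ?thesis using assms(2,3) by (auto simp: realizes_def)
qed

fun gconv :: "('n,'a) gn \<Rightarrow> ('n,'b) gn" where
  "gconv (GC i) = GC i" | "gconv (GK c) = GK c" | "gconv (GL a) = GL undefined"

lemma gint_gconv[simp]: "gint (gconv x) = gint x" by (cases x) auto
lemma gcp_gconv[simp]: "gcp p (gconv x) = gcp p x" by (cases x) auto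
lemma gconv_GK[simp]: "gconv x = GK c \<longleftrightarrow> x = GK c" by (cases x) auto

definition gbind :: "('n,'a) gt \<Rightarrow> ('a \<Rightarrow> ('n,'b) gt) \<Rightarrow> ('n,'b) gt" where
  "gbind t s = (\<lambda>w. if \<exists>j\<le>length w. take j w \<in> gleaves t
      then (let j = (LEAST j. take j w \<in> gleaves t) in s (glab t (take j w)) (drop j w))
      else gconv (t w))"

lemma take_leaves_unique:
  assumes "take j w \<in> gleaves t" "take k w \<in> gleaves t" "j \<le> length w" "k \<le> length w"
  shows "j = k"
proof -
  have *: "j = k" if "take j w \<in> gleaves t" "take k w \<in> gleaves t" "j \<le> length w" "k \<le> length w" "j \<le> k" for j k
  proof -
    have "take (length (take j w)) (take k w) = take j w" using that by (simp add: min_def)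
    then have "take k w = take j w" using gleaves_prefix[OF that(1,2)] by simp
    then show ?thesis using that by (metis length_take min.absorb2)
  qed
  show ?thesis using *[OF assms] *[OF assms(2,1,4,3)] by linarith
qed

lemma gbind_leaf:
  assumes "w0 \<in> gleaves t"
  shows "gbind t s (w0 @ w1) = s (glab t w0) w1"
proof -
  have ex: "\<exists>j\<le>length (w0 @ w1). take j (w0 @ w1) \<in> gleaves t"
    using assms by (intro exI[of _ "length w0"]) auto
  have "(LEAST j. take j (w0 @ w1) \<in> gleaves t) = length w0"
  proof (rule Least_equality)
    show "take (length w0) (w0 @ w1) \<in> gleaves t" using assms by simp
    fix y assume y: "take y (w0 @ w1) \<in> gleaves t"
    show "length w0 \<le> y"
    proof (rule ccontr)
      assume "\<not> length w0 \<le> y"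
      then have "y = length w0" using take_leaves_unique[OF y, of "length w0"] assms by simp
      then show False using \<open>\<not> length w0 \<le> y\<close> by simp
    qed
  qed
  then show ?thesis using ex by (simp add: gbind_def Let_def)
qed

lemma gbind_noleaf:
  assumes "\<forall>j\<le>length w. take j w \<notin> gleaves t"
  shows "gbind t s w = gconv (t w)"
  using assms by (auto simp: gbind_def)

lemma noleaf_prefix_of_reached:
  assumes "w0 \<in> gleaves t" "j < length w0"
  shows "\<forall>i\<le>length (take j w0). take i (take j w0) \<notin> gleaves t"
proof (intro allI impI)
  fix i assume "i \<le> length (take j w0)"
  then have i: "i < length w0" using assms(2) by simp
  have "gint (t (take i w0))" using assms(1) i unfolding gleaves_def greached_def by auto
  moreover have "take i (take j w0) = take i w0" using \<open>i \<le> length (take j w0)\<close>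
    by (auto simp: take_take min_def split: if_splits)
  ultimately show "take i (take j w0) \<notin> gleaves t" by (simp add: gleaves_def)
qed

lemma all_less_add: "(\<forall>j<m+n. P j) \<longleftrightarrow> (\<forall>j<m. P j) \<and> (\<forall>k<n. P (m+k))" for m n :: nat
proof
  assume h: "\<forall>j<m+n. P j"
  have "P j" if "j < m" for j
  proof -
    have "j < m + n" using that by simp
    then show ?thesis using h by blast
  qed
  moreover have "P (m+k)" if "k < n" for k
  proof -
    have "m + k < m + n" using that by simp
    then show ?thesis using h by blast
  qed
  ultimately show "(\<forall>j<m. P j) \<and> (\<forall>k<n. P (m+k))" by blast
next
  assume h: "(\<forall>j<m. P j) \<and> (\<forall>k<n. P (m+k))"
  show "\<forall>j<m+n. P j"
  proof (intro allI impI)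
    fix j assume j: "j < m + n"
    show "P j"
    proof (cases "j < m")
      case True then show ?thesis using h by simp
    next
      case False
      then have "j = m + (j - m)" "j - m < n" using j by auto
      then show ?thesis using h by metis
    qed
  qed
qed

lemma greached_gbind_leaf:
  assumes "w0 \<in> gleaves t"
  shows "greached (gbind t s) (w0 @ w1) \<longleftrightarrow> greached (s (glab t w0)) w1"
proof -
  have A: "gint (gbind t s (take j (w0 @ w1)))" if "j < length w0" for j
  proof -
    have "gbind t s (take j (w0 @ w1)) = gconv (t (take j w0))"
      using that gbind_noleaf[OF noleaf_prefix_of_reached[OF assms that]] by simp
    moreover have "gint (t (take j w0))" using assms that unfolding gleaves_def greached_def by auto
    ultimately show ?thesis by simp
  qed
  have B: "gbind t s (take (length w0 + k) (w0 @ w1)) = s (glab t w0) (take k w1)" for k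
    using gbind_leaf[OF assms] by simp
  show ?thesis unfolding greached_def length_append all_less_add using A B by simp
qed

lemma greached_gbind_noleaf:
  assumes "greached t w" "\<forall>j\<le>length w. take j w \<notin> gleaves t"
  shows "greached (gbind t s) w"
  unfolding greached_def
proof (intro allI impI)
  fix j assume j: "j < length w"
  have "\<forall>i\<le>length (take j w). take i (take j w) \<notin> gleaves t"
    using assms(2) j by (auto simp: min_def)
  then have "gbind t s (take j w) = gconv (t (take j w))" by (rule gbind_noleaf)
  then show "gint (gbind t s (take j w))" using assms(1) j by (simp add: greached_def)
qed

lemma greached_gbind_cases:
  assumes "greached (gbind t s) w"
  shows "(\<exists>w0 w1. w0 \<in> gleaves t \<and> w = w0 @ w1) \<or> (greached t w \<and> (\<forall>j\<le>length w. take j w \<notin> gleaves t))"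
proof (cases "\<exists>j\<le>length w. take j w \<in> gleaves t")
  case True
  then obtain j where "take j w \<in> gleaves t" by blast
  then show ?thesis by (metis append_take_drop_id)
next
  case False
  have "gint (t (take j w))" if j: "j < length w" for j
  proof -
    have "\<forall>i\<le>length (take j w). take i (take j w) \<notin> gleaves t"
      using False j by (auto simp: min_def)
    then have "gbind t s (take j w) = gconv (t (take j w))" by (rule gbind_noleaf)
    moreover have "gint (gbind t s (take j w))" using assms j by (simp add: greached_def)
    ultimately show ?thesis by (metis gint_gconv)
  qed
  then show ?thesis using False by (simp add: greached_def)
qed

lemma gleaves_gbind:
  "gleaves (gbind t s) = {w. \<exists>w0 w1. w = w0 @ w1 \<and> w0 \<in> gleaves t \<and> w1 \<in> gleaves (s (glab t w0))}"
proof (intro set_eqI iffI)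
  fix w assume w: "w \<in> gleaves (gbind t s)"
  then have r: "greached (gbind t s) w" and ni: "\<not> gint (gbind t s w)" by (auto simp: gleaves_def)
  from greached_gbind_cases[OF r] show "w \<in> {w. \<exists>w0 w1. w = w0 @ w1 \<and> w0 \<in> gleaves t \<and> w1 \<in> gleaves (s (glab t w0))}"
  proof
    assume "\<exists>w0 w1. w0 \<in> gleaves t \<and> w = w0 @ w1"
    then obtain w0 w1 where h: "w0 \<in> gleaves t" "w = w0 @ w1" by blast
    then have "w1 \<in> gleaves (s (glab t w0))"
      using r ni greached_gbind_leaf[OF h(1), where s=s] gbind_leaf[OF h(1), where s=s] by (auto simp: gleaves_def)
    then show ?thesis using h by blast
  next
    assume h: "greached t w \<and> (\<forall>j\<le>length w. take j w \<notin> gleaves t)"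
    then have "gbind t s w = gconv (t w)" using gbind_noleaf by blast
    then have "w \<in> gleaves t" using h ni by (simp add: gleaves_def)
    then show ?thesis using h by (metis order_refl take_all)
  qed
next
  fix w assume "w \<in> {w. \<exists>w0 w1. w = w0 @ w1 \<and> w0 \<in> gleaves t \<and> w1 \<in> gleaves (s (glab t w0))}"
  then obtain w0 w1 where h: "w = w0 @ w1" "w0 \<in> gleaves t" "w1 \<in> gleaves (s (glab t w0))" by blast
  then show "w \<in> gleaves (gbind t s)"
    using greached_gbind_leaf[OF h(2), where s=s] gbind_leaf[OF h(2), where s=s] by (auto simp: gleaves_def)
qed

lemma glv_eq: "glv t a = {w \<in> gleaves t. t w = GL a}"
  unfolding glv_def gleaves_def by auto

lemma glv_gbind:
  "glv (gbind t s) c = {w. \<exists>w0 w1. w = w0 @ w1 \<and> w0 \<in> gleaves t \<and> w1 \<in> glv (s (glab t w0)) c}"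
proof (intro set_eqI iffI)
  fix w assume "w \<in> glv (gbind t s) c"
  then have w: "w \<in> gleaves (gbind t s)" "gbind t s w = GL c" by (auto simp: glv_eq)
  then obtain w0 w1 where h: "w = w0 @ w1" "w0 \<in> gleaves t" "w1 \<in> gleaves (s (glab t w0))"
    unfolding gleaves_gbind by blast
  have "s (glab t w0) w1 = GL c" using w(2) h(1) gbind_leaf[OF h(2), where s=s] by simp
  then have "w1 \<in> glv (s (glab t w0)) c" using h(3) by (simp add: glv_eq)
  then show "w \<in> {w. \<exists>w0 w1. w = w0 @ w1 \<and> w0 \<in> gleaves t \<and> w1 \<in> glv (s (glab t w0)) c}"
    using h by blast
next
  fix w assume "w \<in> {w. \<exists>w0 w1. w = w0 @ w1 \<and> w0 \<in> gleaves t \<and> w1 \<in> glv (s (glab t w0)) c}"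
  then obtain w0 w1 where h: "w = w0 @ w1" "w0 \<in> gleaves t" "w1 \<in> glv (s (glab t w0)) c" by blast
  have "w \<in> gleaves (gbind t s)" unfolding gleaves_gbind using h(1,2) glv_subD[OF h(3)] by blast
  moreover have "gbind t s w = GL c" using h gbind_leaf[OF h(2), where s=s] by (simp add: glv_def)
  ultimately show "w \<in> glv (gbind t s) c" by (simp add: glv_eq)
qed



lemma gpp_gbind:
  assumes "w0 \<in> gleaves t"
  shows "gpp (gbind t s) p (w0 @ w1) = gpp t p w0 * gpp (s (glab t w0)) p w1"
proof -
  have "gpp (gbind t s) p w0 = gpp t p w0"
    unfolding gpp_def
  proof (rule prod.cong[OF refl])
    fix j assume "j \<in> {..<length w0}"
    then have "gbind t s (take j w0) = gconv (t (take j w0))"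
      using gbind_noleaf[OF noleaf_prefix_of_reached[OF assms]] by simp
    then show "(let q = gcp p (gbind t s (take j w0)) in if w0 ! j then q else 1 - q) =
               (let q = gcp p (t (take j w0)) in if w0 ! j then q else 1 - q)" by simp
  qed
  moreover have "gbind t s (w0 @ take k w1) = s (glab t w0) (take k w1)" for k
    using gbind_leaf[OF assms, where s=s] by simp
  ultimately show ?thesis unfolding gpp_append by (simp add: gpp_def)
qed

lemma gwf_gbind:
  assumes "gwf t" "\<And>a. gwf (s a)"
  shows "gwf (gbind t s)"
  unfolding gwf_def
proof (intro allI impI)
  fix w c assume h: "greached (gbind t s) w \<and> gbind t s w = GK c"
  have hr: "greached (gbind t s) w" using h by simp
  from greached_gbind_cases[OF hr] show "0 < c \<and> c < 1"
  proof (elim disjE exE conjE)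
    fix w0 w1 assume a: "w0 \<in> gleaves t" "w = w0 @ w1"
    then have "greached (s (glab t w0)) w1" "s (glab t w0) w1 = GK c"
      using h greached_gbind_leaf[OF a(1), where s=s] gbind_leaf[OF a(1), where s=s] by auto
    then show ?thesis using assms(2) by (auto simp: gwf_def)
  next
    assume "greached t w" "\<forall>j\<le>length w. take j w \<notin> gleaves t"
    then show ?thesis using h gbind_noleaf[of w t s] assms(1) by (auto simp: gwf_def)
  qed
qed

lemma has_sum_group_union:
  assumes "finite S'" "\<And>a. (gpp t p has_sum D a) (glv t a)"
  shows "((\<lambda>w. gpp t p w * \<phi> (glab t w)) has_sum (\<Sum>a\<in>S'. D a * \<phi> a)) (\<Union>a\<in>S'. glv t a)"
  using assms(1)
proof (induction S' rule: finite_induct)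
  case empty then show ?case by simp
next
  case (insert a S')
  have "((\<lambda>w. gpp t p w * \<phi> (glab t w)) has_sum D a * \<phi> a) (glv t a)"
  proof -
    have "((\<lambda>w. gpp t p w * \<phi> a) has_sum D a * \<phi> a) (glv t a)"
      using has_sum_cmult_left[OF assms(2)[of a]] by simp
    then show ?thesis by (subst has_sum_cong[where g="\<lambda>w. gpp t p w * \<phi> a"]) (auto simp: glv_glab)
  qed
  moreover have "glv t a \<inter> (\<Union>b\<in>S'. glv t b) = {}"
    using insert(2) by (auto simp: glv_def)
  ultimately show ?case using insert by (simp add: has_sum_Un_disjoint)
qed

lemma realizes_nonneg_zero:
  assumes "realizes t p S D" "incube p" "gwf t" "w \<in> glv t a" "D a = 0"
  shows "gpp t p w = 0"
proof (rule nonneg_has_sum_le_0D[where f="gpp t p" and a="D a" and A="glv t a"])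
  show "(gpp t p has_sum D a) (glv t a)" using assms(1) by (simp add: realizes_def)
qed (use assms gpp_nonneg in \<open>auto simp: glv_def\<close>)

lemma has_sum_group:
  assumes "realizes t p S D" "incube p" "gwf t"
  shows "((\<lambda>w. gpp t p w * \<phi> (glab t w)) has_sum (\<Sum>a\<in>S. D a * \<phi> a)) (gleaves t)"
proof -
  have fin: "finite S" and z: "\<And>a. a \<notin> S \<Longrightarrow> D a = 0" and hs: "\<And>a. (gpp t p has_sum D a) (glv t a)"
    using assms(1) by (auto simp: realizes_def)
  have U: "((\<lambda>w. gpp t p w * \<phi> (glab t w)) has_sum (\<Sum>a\<in>S. D a * \<phi> a)) (\<Union>a\<in>S. glv t a)"
    by (rule has_sum_group_union[OF fin hs])
  show ?thesis
  proof (subst has_sum_cong_neutral[where T="\<Union>a\<in>S. glv t a" and g="\<lambda>w. gpp t p w * \<phi> (glab t w)"])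
    fix w assume w: "w \<in> gleaves t - (\<Union>a\<in>S. glv t a)"
    then have "w \<in> glv t (glab t w)" "glab t w \<notin> S" using gleaves_glv by fastforce+
    then have "gpp t p w = 0" using realizes_nonneg_zero[OF assms(1,2,3)] z by blast
    then show "gpp t p w * \<phi> (glab t w) = 0" by simp
  next
    fix w assume "w \<in> (\<Union>a\<in>S. glv t a) - gleaves t"
    then obtain a where "w \<in> glv t a" "w \<notin> gleaves t" by blast
    then show "gpp t p w * \<phi> (glab t w) = 0" using glv_subD[of w t a] by simp
  next
    show "((\<lambda>w. gpp t p w * \<phi> (glab t w)) has_sum (\<Sum>a\<in>S. D a * \<phi> a)) (\<Union>a\<in>S. glv t a)"
      by (rule U)
  qed auto
qed

lemma realizes_sum1:
  assumes "realizes t p S D" "incube p" "gwf t"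
  shows "(\<Sum>a\<in>S. D a) = 1"
proof -
  have "(gpp t p has_sum (\<Sum>a\<in>S. D a * 1)) (gleaves t)"
    using has_sum_group[OF assms, of "\<lambda>_. 1"] by simp
  moreover have "(gpp t p has_sum 1) (gleaves t)" using assms(1) by (simp add: realizes_def)
  ultimately show ?thesis using has_sum_unique by fastforce
qed

lemma realizes_nonneg:
  assumes "realizes t p S D" "incube p" "gwf t"
  shows "0 \<le> D a"
proof -
  have "(gpp t p has_sum D a) (glv t a)" using assms(1) by (simp add: realizes_def)
  then show ?thesis by (rule has_sum_nonneg) (use assms gpp_nonneg in \<open>auto simp: glv_def\<close>)
qed

lemma has_sum_gbind:
  assumes p: "incube p" and wt: "gwf t" and ws: "\<And>a. gwf (s a)" and r: "realizes t p S D"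
    and B: "\<And>a. B a \<subseteq> gleaves (s a)"
    and G: "\<And>a. a \<in> S \<Longrightarrow> D a \<noteq> 0 \<Longrightarrow> (gpp (s a) p has_sum G a) (B a)"
  shows "(gpp (gbind t s) p has_sum (\<Sum>a\<in>S. D a * G a))
           {w. \<exists>w0 w1. w = w0 @ w1 \<and> w0 \<in> gleaves t \<and> w1 \<in> B (glab t w0)}"
proof -
  define G' where "G' a = (if a \<in> S \<and> D a \<noteq> 0 then G a else 0)" for a
  have zS: "\<And>a. a \<notin> S \<Longrightarrow> D a = 0" using r by (simp add: realizes_def)
  have eqset: "{w. \<exists>w0 w1. w = w0 @ w1 \<and> w0 \<in> gleaves t \<and> w1 \<in> B (glab t w0)}
      = (\<lambda>(x,y). x @ y) ` Sigma (gleaves t) (\<lambda>w0. B (glab t w0))" by auto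
  have inj: "inj_on (\<lambda>(x,y). x @ y) (Sigma (gleaves t) (\<lambda>w0. B (glab t w0)))"
    by (auto simp: inj_on_def dest: gleaves_append_eq)
  define f where "f = (\<lambda>(w0,w1). gpp t p w0 * gpp (s (glab t w0)) p w1)"
  have inner: "((\<lambda>w1. f (w0, w1)) has_sum gpp t p w0 * G' (glab t w0)) (B (glab t w0))"
    if w0: "w0 \<in> gleaves t" for w0
  proof (cases "glab t w0 \<in> S \<and> D (glab t w0) \<noteq> 0")
    case True
    then show ?thesis unfolding f_def G'_def using has_sum_cmult_right[OF G[of "glab t w0"]] by simp
  next
    case False
    then have "D (glab t w0) = 0" using zS by blast
    then have "gpp t p w0 = 0" using realizes_nonneg_zero[OF r p wt gleaves_glv[OF w0]] by simp
    then show ?thesis by (simp add: f_def)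
  qed
  have outer: "((\<lambda>w0. gpp t p w0 * G' (glab t w0)) has_sum (\<Sum>a\<in>S. D a * G a)) (gleaves t)"
  proof -
    have "((\<lambda>w0. gpp t p w0 * G' (glab t w0)) has_sum (\<Sum>a\<in>S. D a * G' a)) (gleaves t)"
      by (rule has_sum_group[OF r p wt])
    moreover have "(\<Sum>a\<in>S. D a * G' a) = (\<Sum>a\<in>S. D a * G a)"
      by (rule sum.cong) (auto simp: G'_def)
    ultimately show ?thesis by simp
  qed
  have nonneg: "0 \<le> f (w0, w1)" if "w0 \<in> gleaves t" "w1 \<in> B (glab t w0)" for w0 w1
  proof -
    have "w1 \<in> gleaves (s (glab t w0))" using B that(2) by blast
    then show ?thesis using that(1) gpp_nonneg[OF p wt] gpp_nonneg[OF p ws]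
      unfolding f_def gleaves_def by (auto intro!: mult_nonneg_nonneg)
  qed
  have "(f has_sum (\<Sum>a\<in>S. D a * G a)) (Sigma (gleaves t) (\<lambda>w0. B (glab t w0)))"
  proof (rule has_sum_SigmaI[OF _ outer])
    show "f summable_on Sigma (gleaves t) (\<lambda>w0. B (glab t w0))"
      by (rule summable_on_SigmaI[OF _ has_sum_imp_summable[OF outer]]) (use inner nonneg in auto)
  qed (use inner in auto)
  then have "((gpp (gbind t s) p \<circ> (\<lambda>(x,y). x @ y)) has_sum (\<Sum>a\<in>S. D a * G a)) (Sigma (gleaves t) (\<lambda>w0. B (glab t w0)))"
    by (subst has_sum_cong[where g=f]) (auto simp: f_def gpp_gbind)
  then show ?thesis unfolding eqset by (subst has_sum_reindex[OF inj])
qed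

lemma realizes_gbind:
  assumes p: "incube p" and wt: "gwf t" and ws: "\<And>a. gwf (s a)" and r: "realizes t p S D"
    and rs: "\<And>a. a \<in> S \<Longrightarrow> D a \<noteq> 0 \<Longrightarrow> realizes (s a) p (S' a) (E a)"
  shows "realizes (gbind t s) p (\<Union>a\<in>{a\<in>S. D a \<noteq> 0}. S' a) (\<lambda>c. \<Sum>a\<in>S. D a * E a c)"
  unfolding realizes_def
proof (intro conjI allI impI)
  show "finite (\<Union>a\<in>{a\<in>S. D a \<noteq> 0}. S' a)" using r rs by (auto simp: realizes_def)
next
  fix c assume c: "c \<notin> (\<Union>a\<in>{a\<in>S. D a \<noteq> 0}. S' a)"
  show "(\<Sum>a\<in>S. D a * E a c) = 0"
  proof (rule sum.neutral, intro ballI)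
    fix a assume "a \<in> S"
    then show "D a * E a c = 0" using c rs[of a] by (cases "D a = 0") (auto simp: realizes_def)
  qed
next
  have "(gpp (gbind t s) p has_sum (\<Sum>a\<in>S. D a * 1)) (gleaves (gbind t s))"
    unfolding gleaves_gbind
    by (rule has_sum_gbind[OF p wt ws r]) (use rs in \<open>auto simp: realizes_def\<close>)
  then show "(gpp (gbind t s) p has_sum 1) (gleaves (gbind t s))"
    using realizes_sum1[OF r p wt] by simp
next
  fix c
  show "(gpp (gbind t s) p has_sum (\<Sum>a\<in>S. D a * E a c)) (glv (gbind t s) c)"
    unfolding glv_gbind
    by (rule has_sum_gbind[OF p wt ws r, where B="\<lambda>a. glv (s a) c"]) (use rs glv_subD in \<open>auto simp: realizes_def\<close>)
qed

definition lj :: "('n,'a) gt \<Rightarrow> bool list \<Rightarrow> nat" where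
  "lj b w = (LEAST j. take j w \<in> gleaves b)"

lemma lj_le: "take j w \<in> gleaves b \<Longrightarrow> j \<le> length w \<Longrightarrow> lj b w \<le> length w"
  unfolding lj_def by (meson Least_le le_trans)

function gloop :: "('n,'a option) gt \<Rightarrow> bool list \<Rightarrow> ('n,'a) gn" where
  "gloop b w = (if \<exists>j\<le>length w. take j w \<in> gleaves b then
      (if glab b (take (lj b w) w) = None \<and> lj b w \<noteq> 0 then gloop b (drop (lj b w) w)
       else if glab b (take (lj b w) w) = None then GL undefined
       else GL (the (glab b (take (lj b w) w))))
    else gconv (b w))"
  by pat_completeness auto
termination
  by (relation "Wellfounded.measure (\<lambda>(b,w). length w)") (auto dest: lj_le)

declare gloop.simps[simp del]

definition lcont :: "('n,'a option) gt \<Rightarrow> 'a option \<Rightarrow> ('n,'a) gt" where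
  "lcont b x = (case x of None \<Rightarrow> gloop b | Some a \<Rightarrow> gleaf a)"

lemma Nil_not_leaf: "gint (b []) \<Longrightarrow> [] \<notin> gleaves b"
  by (simp add: gleaves_def)

lemma gloop_eq:
  assumes "gint (b [])"
  shows "gloop b = gbind b (lcont b)"
proof
  fix w
  show "gloop b w = gbind b (lcont b) w"
  proof (cases "\<exists>j\<le>length w. take j w \<in> gleaves b")
    case True
    have ne: "lj b w \<noteq> 0"
    proof
      assume "lj b w = 0"
      moreover have "take (lj b w) w \<in> gleaves b" unfolding lj_def using True by (metis LeastI)
      ultimately show False using Nil_not_leaf[of b, OF assms] by simp
    qed
    have gb: "gbind b (lcont b) w = lcont b (glab b (take (lj b w) w)) (drop (lj b w) w)"
      using True by (simp add: gbind_def Let_def lj_def)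
    show ?thesis
    proof (cases "glab b (take (lj b w) w)")
      case None
      have "gloop b w = gloop b (drop (lj b w) w)"
        by (subst gloop.simps[of b w]) (simp only: True None ne simp_thms if_True)
      then show ?thesis using gb None by (simp add: lcont_def)
    next
      case (Some a)
      have "gloop b w = GL a"
        by (subst gloop.simps[of b w]) (simp only: True Some ne simp_thms if_True if_False option.distinct option.sel)
      then show ?thesis using gb Some by (simp add: lcont_def gleaf_def)
    qed
  next
    case False
    have "gloop b w = gconv (b w)"
      by (subst gloop.simps[of b w]) (simp only: False if_False)
    then show ?thesis using gbind_noleaf[of w b "lcont b"] False by simp
  qed
qed


lemma lcont_simps[simp]: "lcont b None = gloop b" "lcont b (Some a) = gleaf a"
  by (simp_all add: lcont_def)

lemma glab_eqI: "t w = GL a \<Longrightarrow> glab t w = a"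
  by (simp add: glab_def)

lemma glab_gbind_leaf: "w0 \<in> gleaves t \<Longrightarrow> glab (gbind t s) (w0 @ w1) = glab (s (glab t w0)) w1"
  by (simp add: glab_def gbind_leaf)

lemma gleaf_leaves_iff: "w \<in> gleaves (gleaf a) \<longleftrightarrow> w = []" by simp

definition Yset :: "('n,'a option) gt \<Rightarrow> 'a set \<Rightarrow> bool list set" where
  "Yset b A = {w \<in> gleaves b. \<exists>a\<in>A. glab b w = Some a}"

fun lev :: "('n,'a option) gt \<Rightarrow> bool list set \<Rightarrow> nat \<Rightarrow> bool list set" where
  "lev b Y 0 = Y"
| "lev b Y (Suc k) = {w. \<exists>w0 w1. w = w0 @ w1 \<and> w0 \<in> glv b None \<and> w1 \<in> lev b Y k}"

lemma step_char:
  assumes "gint (b [])"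
  shows "(w \<in> gleaves (gloop b) \<and> glab (gloop b) w \<in> A) \<longleftrightarrow>
    (w \<in> Yset b A \<or> (\<exists>w0 w1. w = w0 @ w1 \<and> w0 \<in> glv b None \<and> w1 \<in> gleaves (gloop b) \<and> glab (gloop b) w1 \<in> A))"
    (is "?L \<longleftrightarrow> ?R")
proof
  assume L: ?L
  have "w \<in> gleaves (gbind b (lcont b))" using L gloop_eq[of b, OF assms] by simp
  then obtain w0 w1 where h: "w = w0 @ w1" "w0 \<in> gleaves b" "w1 \<in> gleaves (lcont b (glab b w0))"
    unfolding gleaves_gbind by blast
  have lab: "glab (gloop b) w = glab (lcont b (glab b w0)) w1"
    using glab_gbind_leaf[OF h(2), of "lcont b" w1] h(1) gloop_eq[of b, OF assms] by simp
  show ?R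
  proof (cases "glab b w0")
    case None
    then have "w0 \<in> glv b None" using gleaves_glv[OF h(2)] by simp
    then show ?thesis using h None L lab by auto
  next
    case (Some a)
    then have "w1 = []" using h(3) by simp
    then have "glab (gloop b) w = a" using lab Some by (simp add: glab_def gleaf_def)
    then show ?thesis using L h Some \<open>w1 = []\<close> by (auto simp: Yset_def)
  qed
next
  assume R: ?R
  show ?L
  proof (cases "w \<in> Yset b A")
    case True
    then obtain a where a: "w \<in> gleaves b" "glab b w = Some a" "a \<in> A" by (auto simp: Yset_def)
    have "w @ [] \<in> gleaves (gbind b (lcont b))" unfolding gleaves_gbind
      by (intro CollectI exI[of _ w] exI[of _ "[]"]) (use a in simp)
    moreover have "glab (gbind b (lcont b)) (w @ []) = a"
      using glab_gbind_leaf[OF a(1), of "lcont b" "[]"] a by (simp add: glab_def gleaf_def)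
    ultimately show ?thesis using gloop_eq[of b, OF assms] a by simp
  next
    case False
    then obtain w0 w1 where h: "w = w0 @ w1" "w0 \<in> glv b None" "w1 \<in> gleaves (gloop b)" "glab (gloop b) w1 \<in> A"
      using R by blast
    have w0: "w0 \<in> gleaves b" "glab b w0 = None" using glv_subD[OF h(2)] glv_glab[OF h(2)] by blast+
    have "w \<in> gleaves (gbind b (lcont b))" unfolding gleaves_gbind
      by (intro CollectI exI[of _ w0] exI[of _ w1]) (use h w0 in simp)
    moreover have "glab (gbind b (lcont b)) w = glab (gloop b) w1"
      using glab_gbind_leaf[OF w0(1), of "lcont b" w1] h w0 by simp
    ultimately show ?thesis using gloop_eq[of b, OF assms] h by simp
  qed
qed

lemma nonempty_leaf: "gint (b []) \<Longrightarrow> w0 \<in> gleaves b \<Longrightarrow> w0 \<noteq> []"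
  using Nil_not_leaf by blast

lemma loop_char:
  assumes "gint (b [])"
  shows "(w \<in> gleaves (gloop b) \<and> glab (gloop b) w \<in> A) \<longleftrightarrow> w \<in> (\<Union>k. lev b (Yset b A) k)"
proof
  show "w \<in> gleaves (gloop b) \<and> glab (gloop b) w \<in> A \<Longrightarrow> w \<in> (\<Union>k. lev b (Yset b A) k)"
  proof (induction "length w" arbitrary: w rule: less_induct)
    case less
    have "w \<in> Yset b A \<or> (\<exists>w0 w1. w = w0 @ w1 \<and> w0 \<in> glv b None \<and> w1 \<in> gleaves (gloop b) \<and> glab (gloop b) w1 \<in> A)"
      using less.prems step_char[of b, OF assms] by blast
    then show ?case
    proof (elim disjE exE conjE)
      assume "w \<in> Yset b A" then show ?thesis by (auto intro: exI[of _ 0])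
    next
      fix w0 w1 assume h: "w = w0 @ w1" "w0 \<in> glv b None" "w1 \<in> gleaves (gloop b)" "glab (gloop b) w1 \<in> A"
      have "w0 \<noteq> []" using nonempty_leaf[of b, OF assms glv_subD[OF h(2)]] .
      then have "length w1 < length w" using h(1) by simp
      then have "w1 \<in> (\<Union>k. lev b (Yset b A) k)" using less.hyps h(3,4) by blast
      then obtain k where "w1 \<in> lev b (Yset b A) k" by blast
      then have "w \<in> lev b (Yset b A) (Suc k)" using h by auto
      then show ?thesis by blast
    qed
  qed
next
  assume "w \<in> (\<Union>k. lev b (Yset b A) k)"
  then obtain k where "w \<in> lev b (Yset b A) k" by blast
  then show "w \<in> gleaves (gloop b) \<and> glab (gloop b) w \<in> A"
  proof (induction k arbitrary: w)
    case 0 then show ?case using step_char[of b, OF assms, of w A] by simp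
  next
    case (Suc k)
    then obtain w0 w1 where h: "w = w0 @ w1" "w0 \<in> glv b None" "w1 \<in> lev b (Yset b A) k" by auto
    then show ?case using Suc.IH[OF h(3)] step_char[of b, OF assms, of w A] by blast
  qed
qed

lemma gwf_gloop:
  assumes "gwf b" "gint (b [])"
  shows "gwf (gloop b)"
  unfolding gwf_def
proof (intro allI impI)
  fix w c
  assume "greached (gloop b) w \<and> gloop b w = GK c"
  then show "0 < c \<and> c < 1"
  proof (induction "length w" arbitrary: w rule: less_induct)
    case less
    have r: "greached (gbind b (lcont b)) w" and v: "gbind b (lcont b) w = GK c"
      using less.prems gloop_eq[of b, OF assms(2)] by auto
    from greached_gbind_cases[OF r] show ?case
    proof (elim disjE exE conjE)
      fix w0 w1 assume a: "w0 \<in> gleaves b" "w = w0 @ w1"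
      then have r1: "greached (lcont b (glab b w0)) w1" and v1: "lcont b (glab b w0) w1 = GK c"
        using r v greached_gbind_leaf[OF a(1), where s="lcont b"] gbind_leaf[OF a(1), where s="lcont b"] by auto
      show ?thesis
      proof (cases "glab b w0")
        case None
        have "w0 \<noteq> []" using nonempty_leaf[of b, OF assms(2) a(1)] .
        then have "length w1 < length w" using a(2) by simp
        then show ?thesis using less.hyps r1 v1 None by simp
      next
        case (Some a)
        then show ?thesis using v1 by (simp add: gleaf_def)
      qed
    next
      assume "greached b w" "\<forall>j\<le>length w. take j w \<notin> gleaves b"
      then show ?thesis using v gbind_noleaf[of w b "lcont b"] assms(1) by (auto simp: gwf_def)
    qed
  qed
qed

lemma lev_mono: "Y \<subseteq> Y' \<Longrightarrow> lev b Y k \<subseteq> lev b Y' k"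
  by (induction k) auto

lemma Yset_UNIV: "Y \<subseteq> gleaves b \<Longrightarrow> Y \<inter> glv b None = {} \<Longrightarrow> Y \<subseteq> Yset b UNIV"
  unfolding Yset_def
proof (intro subsetI CollectI conjI)
  fix w assume "Y \<subseteq> gleaves b" "Y \<inter> glv b None = {}" "w \<in> Y"
  then have "w \<in> gleaves b" "glab b w \<noteq> None" using gleaves_glv by fastforce+
  then show "w \<in> gleaves b" "\<exists>a\<in>UNIV. glab b w = Some a" by auto
qed

lemma lev_sub:
  assumes "gint (b [])" "Y \<subseteq> gleaves b" "Y \<inter> glv b None = {}"
  shows "lev b Y k \<subseteq> gleaves (gloop b)"
proof
  fix w assume "w \<in> lev b Y k"
  then have "w \<in> lev b (Yset b UNIV) k" using lev_mono[OF Yset_UNIV[OF assms(2,3)]] by blast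
  then show "w \<in> gleaves (gloop b)" using loop_char[of b, OF assms(1), of w UNIV] by blast
qed

lemma lev_disjoint:
  assumes "Y \<subseteq> gleaves b" "Y \<inter> glv b None = {}"
  shows "i \<noteq> j \<Longrightarrow> lev b Y i \<inter> lev b Y j = {}"
proof (induction i arbitrary: j)
  case 0
  then obtain j' where j: "j = Suc j'" by (cases j) auto
  show ?case
  proof (rule ccontr)
    assume "lev b Y 0 \<inter> lev b Y j \<noteq> {}"
    then obtain w w0 w1 where h: "w \<in> Y" "w = w0 @ w1" "w0 \<in> glv b None" using j by auto
    have "w \<in> gleaves b" using h(1) assms(1) by blast
    moreover have "w0 \<in> gleaves b" using glv_subD[OF h(3)] .
    ultimately have "w = w0" using gleaves_prefix[of w0 b w] h(2) by simp
    then show False using h assms(2) by blast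
  qed
next
  case (Suc i)
  show ?case
  proof (cases j)
    case 0
    show ?thesis
    proof (rule ccontr)
      assume "lev b Y (Suc i) \<inter> lev b Y j \<noteq> {}"
      then obtain w w0 w1 where h: "w \<in> Y" "w = w0 @ w1" "w0 \<in> glv b None" using 0 by auto
      have "w \<in> gleaves b" using h(1) assms(1) by blast
      moreover have "w0 \<in> gleaves b" using glv_subD[OF h(3)] .
      ultimately have "w = w0" using gleaves_prefix[of w0 b w] h(2) by simp
      then show False using h assms(2) by blast
    qed
  next
    case (Suc j')
    then have ne: "i \<noteq> j'" using Suc.prems by simp
    show ?thesis
    proof (rule ccontr)
      assume "lev b Y (Suc i) \<inter> lev b Y j \<noteq> {}"
      then obtain w0 w1 w0' w1' where h: "w0 @ w1 = w0' @ w1'" "w0 \<in> glv b None" "w1 \<in> lev b Y i"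
        "w0' \<in> glv b None" "w1' \<in> lev b Y j'" using Suc by auto
      then have "w1 = w1'" using gleaves_append_eq[OF glv_subD[OF h(2)] glv_subD[OF h(4)] h(1)] by blast
      then show False using Suc.IH[OF ne] h by blast
    qed
  qed
qed


lemma glv_iff: "w \<in> gleaves t \<Longrightarrow> w \<in> glv t a \<longleftrightarrow> glab t w = a"
  using gleaves_glv glv_glab by metis

lemma gwf_lcont: "gwf b \<Longrightarrow> gint (b []) \<Longrightarrow> gwf (lcont b x)"
  by (cases x) (simp_all add: gwf_gloop)

lemma lev_has_sum:
  assumes p: "incube p" and wb: "gwf b" and ib: "gint (b [])" and r: "realizes b p S D"
    and Ys: "Y \<subseteq> gleaves b" and Yn: "Y \<inter> glv b None = {}" and Q: "(gpp b p has_sum Q) Y"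
  shows "(gpp (gloop b) p has_sum (D None ^ k * Q)) (lev b Y k)"
proof (induction k)
  case 0
  have "gpp (gloop b) p w = gpp b p w" if "w \<in> Y" for w
  proof -
    have w: "w \<in> gleaves b" using that Ys by blast
    have "gpp (gloop b) p (w @ []) = gpp b p w * gpp (lcont b (glab b w)) p []"
      using gpp_gbind[OF w, of "lcont b" p "[]"] gloop_eq[of b, OF ib] by simp
    then show ?thesis by simp
  qed
  then show ?case using Q by (subst has_sum_cong[where g="gpp b p"]) auto
next
  case (Suc k)
  define B where "B x = (if x = None then lev b Y k else {})" for x :: "'b option"
  define G where "G x = (if x = None then D None ^ k * Q else 0)" for x :: "'b option"
  have H: "(gpp (gbind b (lcont b)) p has_sum (\<Sum>a\<in>S. D a * G a))
           {w. \<exists>w0 w1. w = w0 @ w1 \<and> w0 \<in> gleaves b \<and> w1 \<in> B (glab b w0)}"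
  proof (rule has_sum_gbind[OF p wb _ r])
    show "gwf (lcont b a)" for a using gwf_lcont[OF wb ib] .
    show "B a \<subseteq> gleaves (lcont b a)" for a
      using lev_sub[OF ib Ys Yn] by (cases a) (auto simp: B_def)
    show "(gpp (lcont b a) p has_sum G a) (B a)" if "a \<in> S" "D a \<noteq> 0" for a
      using Suc.IH by (cases a) (auto simp: B_def G_def)
  qed
  have set: "{w. \<exists>w0 w1. w = w0 @ w1 \<and> w0 \<in> gleaves b \<and> w1 \<in> B (glab b w0)} = lev b Y (Suc k)"
  proof (intro set_eqI iffI)
    fix w assume "w \<in> {w. \<exists>w0 w1. w = w0 @ w1 \<and> w0 \<in> gleaves b \<and> w1 \<in> B (glab b w0)}"
    then obtain w0 w1 where h: "w = w0 @ w1" "w0 \<in> gleaves b" "w1 \<in> B (glab b w0)" by blast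
    then have "glab b w0 = None" by (auto simp: B_def split: if_splits)
    then have "w0 \<in> glv b None" using gleaves_glv[OF h(2)] by simp
    then show "w \<in> lev b Y (Suc k)" using h \<open>glab b w0 = None\<close> by (auto simp: B_def)
  next
    fix w assume "w \<in> lev b Y (Suc k)"
    then obtain w0 w1 where h: "w = w0 @ w1" "w0 \<in> glv b None" "w1 \<in> lev b Y k" by auto
    have "w0 \<in> gleaves b" "glab b w0 = None" using glv_subD[OF h(2)] glv_glab[OF h(2)] by auto
    then show "w \<in> {w. \<exists>w0 w1. w = w0 @ w1 \<and> w0 \<in> gleaves b \<and> w1 \<in> B (glab b w0)}"
      using h by (auto simp: B_def)
  qed
  have sum: "(\<Sum>a\<in>S. D a * G a) = D None ^ Suc k * Q"
  proof (cases "None \<in> S")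
    case True
    have "(\<Sum>a\<in>S. D a * G a) = (\<Sum>a\<in>S. if a = None then D None * (D None ^ k * Q) else 0)"
      by (rule sum.cong) (auto simp: G_def)
    also have "\<dots> = D None * (D None ^ k * Q)"
      using True r by (simp add: sum.delta realizes_def)
    finally show ?thesis by simp
  next
    case False
    then have "D None = 0" using r by (simp add: realizes_def)
    moreover have "(\<Sum>a\<in>S. D a * G a) = 0"
      by (rule sum.neutral) (use False in \<open>auto simp: G_def\<close>)
    ultimately show ?thesis by simp
  qed
  show ?case using H unfolding set sum gloop_eq[of b, OF ib, symmetric] .
qed

lemma loop_union_has_sum:
  assumes p: "incube p" and wb: "gwf b" and ib: "gint (b [])" and r: "realizes b p S D"
    and Ys: "Y \<subseteq> gleaves b" and Yn: "Y \<inter> glv b None = {}" and Q: "(gpp b p has_sum Q) Y"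
    and R: "D None < 1"
  shows "(gpp (gloop b) p has_sum (Q / (1 - D None))) (\<Union>k. lev b Y k)"
proof -
  have R0: "0 \<le> D None" using realizes_nonneg[OF r p wb] .
  have Q0: "0 \<le> Q" using Q by (rule has_sum_nonneg) (use Ys gpp_nonneg[OF p wb] in \<open>auto simp: gleaves_def\<close>)
  have geo: "((\<lambda>k. D None ^ k * Q) has_sum (Q / (1 - D None))) UNIV"
  proof (rule sums_nonneg_imp_has_sum)
    have "(\<lambda>k. D None ^ k) sums (1 / (1 - D None))" using geometric_sums[of "D None"] R0 R by simp
    then have "(\<lambda>k. D None ^ k * Q) sums (1 / (1 - D None) * Q)" by (rule sums_mult2)
    then show "(\<lambda>k. D None ^ k * Q) sums (Q / (1 - D None))" by simp
    show "0 \<le> D None ^ n * Q" for n using R0 Q0 by simp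
  qed
  have wl: "gwf (gloop b)" using gwf_gloop[OF wb ib] .
  have eq: "(\<Union>k. lev b Y k) = snd ` Sigma UNIV (lev b Y)" by force
  have inj: "inj_on snd (Sigma UNIV (lev b Y))"
    unfolding inj_on_def
  proof (intro ballI impI)
    fix x y assume h: "x \<in> Sigma UNIV (lev b Y)" "y \<in> Sigma UNIV (lev b Y)" "snd x = snd y"
    obtain k w k' w' where xy: "x = (k, w)" "y = (k', w')" by (cases x, cases y)
    have "w \<in> lev b Y k" "w \<in> lev b Y k'" using h xy by auto
    then have "k = k'" using lev_disjoint[OF Ys Yn, of k k'] by blast
    then show "x = y" using h xy by simp
  qed
  have "((\<lambda>(k,w). gpp (gloop b) p w) has_sum (Q / (1 - D None))) (Sigma UNIV (lev b Y))"
  proof (rule has_sum_SigmaI[OF _ geo])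
    show "((\<lambda>w. case (k, w) of (k, w) \<Rightarrow> gpp (gloop b) p w) has_sum D None ^ k * Q) (lev b Y k)" for k
      using lev_has_sum[OF p wb ib r Ys Yn Q, of k] by simp
    show "(\<lambda>(k, w). gpp (gloop b) p w) summable_on Sigma UNIV (lev b Y)"
    proof (rule summable_on_SigmaI[OF _ has_sum_imp_summable[OF geo]])
      show "((\<lambda>w. case (k, w) of (k, w) \<Rightarrow> gpp (gloop b) p w) has_sum D None ^ k * Q) (lev b Y k)" for k
        using lev_has_sum[OF p wb ib r Ys Yn Q, of k] by simp
      show "0 \<le> (case (k, w) of (k, w) \<Rightarrow> gpp (gloop b) p w)" if "k \<in> UNIV" "w \<in> lev b Y k" for k w
        using lev_sub[OF ib Ys Yn] that gpp_nonneg[OF p wl] by (auto simp: gleaves_def)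
    qed
  qed
  then have "((gpp (gloop b) p \<circ> snd) has_sum (Q / (1 - D None))) (Sigma UNIV (lev b Y))"
    by (simp add: o_def case_prod_unfold)
  then show ?thesis unfolding eq by (subst has_sum_reindex[OF inj])
qed

lemma realizes_gloop:
  assumes p: "incube p" and wb: "gwf b" and ib: "gint (b [])" and r: "realizes b p S D"
    and R: "D None < 1"
  shows "realizes (gloop b) p (Some -` S) (\<lambda>a. D (Some a) / (1 - D None))"
  unfolding realizes_def
proof (intro conjI allI impI)
  show "finite (Some -` S)" using r by (auto simp: realizes_def intro: finite_vimageI)
next
  fix a assume "a \<notin> Some -` S"
  then show "D (Some a) / (1 - D None) = 0" using r by (simp add: realizes_def)
next
  have tot: "(gpp b p has_sum 1) (gleaves b)" "(gpp b p has_sum D None) (glv b None)"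
    using r by (auto simp: realizes_def)
  have Yeq: "Yset b UNIV = gleaves b - glv b None"
  proof (intro set_eqI iffI)
    fix w assume "w \<in> Yset b UNIV"
    then obtain a where w: "w \<in> gleaves b" "glab b w = Some a" unfolding Yset_def by blast
    then show "w \<in> gleaves b - glv b None" using glv_iff[OF w(1), of None] by simp
  next
    fix w assume h: "w \<in> gleaves b - glv b None"
    then have w: "w \<in> gleaves b" by blast
    then have "w \<in> gleaves b" "glab b w \<noteq> None" using h glv_iff[OF w, of None] by auto
    then show "w \<in> Yset b UNIV" unfolding Yset_def by auto
  qed
  have Q: "(gpp b p has_sum (1 - D None)) (Yset b UNIV)"
    unfolding Yeq by (rule has_sum_Diff[OF tot]) (rule glv_sub)
  have L: "gleaves (gloop b) = (\<Union>k. lev b (Yset b UNIV) k)"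
    using loop_char[of b, OF ib, where A=UNIV] by blast
  have "(gpp (gloop b) p has_sum ((1 - D None) / (1 - D None))) (gleaves (gloop b))"
    unfolding L by (rule loop_union_has_sum[OF p wb ib r _ _ Q R]) (auto simp: Yset_def glv_def glab_def)
  then show "(gpp (gloop b) p has_sum 1) (gleaves (gloop b))" using R by simp
next
  fix c
  have Yeq: "Yset b {c} = glv b (Some c)"
  proof (intro set_eqI iffI)
    fix w assume "w \<in> Yset b {c}"
    then have w: "w \<in> gleaves b" "glab b w = Some c" unfolding Yset_def by auto
    then show "w \<in> glv b (Some c)" using glv_iff[OF w(1), of "Some c"] by simp
  next
    fix w assume w: "w \<in> glv b (Some c)"
    then show "w \<in> Yset b {c}" unfolding Yset_def using glv_subD[OF w] glv_glab[OF w] by auto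
  qed
  have Q: "(gpp b p has_sum D (Some c)) (Yset b {c})"
    unfolding Yeq using r by (simp add: realizes_def)
  have L: "glv (gloop b) c = (\<Union>k. lev b (Yset b {c}) k)"
  proof -
    have "w \<in> glv (gloop b) c \<longleftrightarrow> w \<in> gleaves (gloop b) \<and> glab (gloop b) w \<in> {c}" for w
      by (auto simp: glv_eq glab_def gleaves_def gint_def split: gn.splits)
    then show ?thesis using loop_char[of b, OF ib, where A="{c}"] by blast
  qed
  show "(gpp (gloop b) p has_sum D (Some c) / (1 - D None)) (glv (gloop b) c)"
    unfolding L by (rule loop_union_has_sum[OF p wb ib r _ _ Q R]) (auto simp: Yset_def glv_def glab_def)
qed

lemma realizes_cong:
  assumes "realizes t p S D" "S \<subseteq> S'" "finite S'" "\<And>a. D a = D' a"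
  shows "realizes t p S' D'"
proof -
  have "D = D'" using assms(4) by auto
  then show ?thesis using assms(1-3) unfolding realizes_def by auto
qed

definition gbern :: "real \<Rightarrow> 'a \<Rightarrow> 'a \<Rightarrow> ('n,'a) gt" where
  "gbern c x y = (if c \<le> 0 then gleaf y else if 1 \<le> c then gleaf x else gnode (GK c) (gleaf y) (gleaf x))"

lemma gwf_gbern: "gwf (gbern c x y)"
  unfolding gbern_def by (auto intro!: gwf_gnode)

lemma realizes_gbern:
  fixes p :: "real ^ 'n" and x y :: 'a
  assumes "0 \<le> c" "c \<le> 1"
  shows "realizes (gbern c x y) p {x, y} (\<lambda>a. (if a = x then c else 0) + (if a = y then 1 - c else 0))"
proof (cases "c \<le> 0")
  case True
  then have c: "c = 0" using assms by simp
  have g: "gbern c x y = gleaf y" using True by (simp add: gbern_def)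
  show ?thesis unfolding g by (rule realizes_cong[OF realizes_gleaf]) (auto simp: c)
next
  case False
  show ?thesis
  proof (cases "1 \<le> c")
    case True
    then have c: "c = 1" using assms by simp
    have g: "gbern c x y = gleaf x" using True False by (simp add: gbern_def)
    show ?thesis unfolding g by (rule realizes_cong[OF realizes_gleaf]) (auto simp: c)
  next
    case F2: False
    have r: "realizes (gnode (GK c) (gleaf y) (gleaf x)) p ({y} \<union> {x})
            (\<lambda>a. (1 - c) * (if a = y then 1 else 0) + c * (if a = x then 1 else 0))"
    proof -
      have "realizes (gnode (GK c) (gleaf y) (gleaf x)) p ({y} \<union> {x})
            (\<lambda>a. (1 - gcp p (GK c :: ('n,'a) gn)) * (if a = y then 1 else 0) + gcp p (GK c :: ('n,'a) gn) * (if a = x then 1 else 0))"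
        by (rule realizes_gnode) (simp_all add: realizes_gleaf)
      then show ?thesis by simp
    qed
    have g: "gbern c x y = gnode (GK c) (gleaf y) (gleaf x)" using F2 False by (simp add: gbern_def)
    show ?thesis unfolding g by (rule realizes_cong[OF r]) auto
  qed
qed

definition setc :: "real ^ 'n \<Rightarrow> 'n \<Rightarrow> real \<Rightarrow> real ^ 'n" where
  "setc v i r = (\<chi> j. if j = i then r else v $ j)"

fun cubeT :: "'n list \<Rightarrow> real ^ 'n \<Rightarrow> ('n, real ^ 'n) gt" where
  "cubeT [] v = gleaf v"
| "cubeT (i # is) v = gnode (GC i) (cubeT is (setc v i 0)) (cubeT is (setc v i 1))"

lemma gwf_cubeT: "gwf (cubeT is v)"
  by (induction "is" arbitrary: v) (auto intro!: gwf_gnode)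

lemma sum_extend_support:
  assumes "finite T" "S \<subseteq> T" "\<And>a. a \<notin> S \<Longrightarrow> D a = 0"
  shows "(\<Sum>a\<in>T. D a *\<^sub>R (a :: 'b :: real_vector)) = (\<Sum>a\<in>S. D a *\<^sub>R a)"
  by (rule sum.mono_neutral_right) (use assms in auto)

lemma cube_realizes:
  assumes p: "incube p"
  shows "distinct is \<Longrightarrow> \<exists>S D. realizes (cubeT is v) p S D \<and>
     (\<Sum>a\<in>S. D a *\<^sub>R a) = (\<chi> j. if j \<in> set is then p $ j else v $ j) \<and>
     (\<forall>a\<in>S. D a \<noteq> 0 \<longrightarrow> (\<forall>j. j \<notin> set is \<longrightarrow> a $ j = v $ j) \<and> (\<forall>j\<in>set is. a $ j = 0 \<or> a $ j = 1))"
proof (induction "is" arbitrary: v)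
  case Nil
  show ?case
    by (rule exI[of _ "{v}"], rule exI[of _ "\<lambda>b. if b = v then 1 else 0"]) (simp add: realizes_gleaf)
next
  case (Cons i "is")
  then have ni: "i \<notin> set is" and d: "distinct is" by auto
  obtain S0 D0 where h0: "realizes (cubeT is (setc v i 0)) p S0 D0"
    "(\<Sum>a\<in>S0. D0 a *\<^sub>R a) = (\<chi> j. if j \<in> set is then p $ j else setc v i 0 $ j)"
    "\<forall>a\<in>S0. D0 a \<noteq> 0 \<longrightarrow> (\<forall>j. j \<notin> set is \<longrightarrow> a $ j = setc v i 0 $ j) \<and> (\<forall>j\<in>set is. a $ j = 0 \<or> a $ j = 1)"
    using Cons.IH[OF d] by blast
  obtain S1 D1 where h1: "realizes (cubeT is (setc v i 1)) p S1 D1"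
    "(\<Sum>a\<in>S1. D1 a *\<^sub>R a) = (\<chi> j. if j \<in> set is then p $ j else setc v i 1 $ j)"
    "\<forall>a\<in>S1. D1 a \<noteq> 0 \<longrightarrow> (\<forall>j. j \<notin> set is \<longrightarrow> a $ j = setc v i 1 $ j) \<and> (\<forall>j\<in>set is. a $ j = 0 \<or> a $ j = 1)"
    using Cons.IH[OF d] by blast
  define q where "q = p $ i"
  have r: "realizes (cubeT (i # is) v) p (S0 \<union> S1) (\<lambda>a. (1 - q) * D0 a + q * D1 a)"
    using realizes_gnode[OF _ h0(1) h1(1), of "GC i"] by (simp add: q_def)
  have fin: "finite S0" "finite S1" using h0(1) h1(1) by (auto simp: realizes_def)
  have z0: "\<And>a. a \<notin> S0 \<Longrightarrow> D0 a = 0" and z1: "\<And>a. a \<notin> S1 \<Longrightarrow> D1 a = 0"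
    using h0(1) h1(1) by (auto simp: realizes_def)
  have "(\<Sum>a\<in>S0 \<union> S1. ((1 - q) * D0 a + q * D1 a) *\<^sub>R a)
      = (1 - q) *\<^sub>R (\<Sum>a\<in>S0 \<union> S1. D0 a *\<^sub>R a) + q *\<^sub>R (\<Sum>a\<in>S0 \<union> S1. D1 a *\<^sub>R a)"
    by (simp add: scaleR_add_left sum.distrib scaleR_sum_right)
  also have "\<dots> = (1 - q) *\<^sub>R (\<Sum>a\<in>S0. D0 a *\<^sub>R a) + q *\<^sub>R (\<Sum>a\<in>S1. D1 a *\<^sub>R a)"
    using sum_extend_support[of "S0 \<union> S1" S0 D0] sum_extend_support[of "S0 \<union> S1" S1 D1] fin z0 z1 by auto
  also have "\<dots> = (\<chi> j. if j \<in> set (i # is) then p $ j else v $ j)"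
    unfolding h0(2) h1(2) using ni by (auto simp: vec_eq_iff setc_def q_def algebra_simps)
  finally have m: "(\<Sum>a\<in>S0 \<union> S1. ((1 - q) * D0 a + q * D1 a) *\<^sub>R a) = (\<chi> j. if j \<in> set (i # is) then p $ j else v $ j)" .
  have s: "\<forall>a\<in>S0 \<union> S1. (1 - q) * D0 a + q * D1 a \<noteq> 0 \<longrightarrow>
      (\<forall>j. j \<notin> set (i # is) \<longrightarrow> a $ j = v $ j) \<and> (\<forall>j\<in>set (i # is). a $ j = 0 \<or> a $ j = 1)"
  proof (intro ballI impI)
    fix a assume "a \<in> S0 \<union> S1" "(1 - q) * D0 a + q * D1 a \<noteq> 0"
    then have "(a \<in> S0 \<and> D0 a \<noteq> 0) \<or> (a \<in> S1 \<and> D1 a \<noteq> 0)" using z0 z1 by force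
    then show "(\<forall>j. j \<notin> set (i # is) \<longrightarrow> a $ j = v $ j) \<and> (\<forall>j\<in>set (i # is). a $ j = 0 \<or> a $ j = 1)"
      using h0(3) h1(3) ni by (auto simp: setc_def)
  qed
  show ?case using r m s by blast
qed

lemma double_filter_sum:
  fixes F :: "'a \<Rightarrow> 'a \<Rightarrow> 'b :: comm_monoid_add"
  assumes "finite S"
  shows "(\<Sum>u1\<in>S. \<Sum>u2\<in>S. if P u1 \<and> Q u2 then F u1 u2 else 0) = (\<Sum>u1\<in>{u\<in>S. P u}. \<Sum>u2\<in>{u\<in>S. Q u}. F u1 u2)"
proof -
  have "(\<Sum>u1\<in>S. \<Sum>u2\<in>S. if P u1 \<and> Q u2 then F u1 u2 else 0)
      = (\<Sum>u1\<in>S. if P u1 then (\<Sum>u2\<in>S. if Q u2 then F u1 u2 else 0) else 0)"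
    by (rule sum.cong) auto
  also have "\<dots> = (\<Sum>u1\<in>{u\<in>S. P u}. \<Sum>u2\<in>S. if Q u2 then F u1 u2 else 0)"
    using assms by (simp add: sum.inter_filter)
  also have "\<dots> = (\<Sum>u1\<in>{u\<in>S. P u}. \<Sum>u2\<in>{u\<in>S. Q u}. F u1 u2)"
    using assms by (simp add: sum.inter_filter)
  finally show ?thesis .
qed

lemma sum_split3:
  fixes f :: "'a \<Rightarrow> 'b :: comm_monoid_add" and l :: "'a \<Rightarrow> real"
  assumes "finite S"
  shows "(\<Sum>u\<in>S. f u) = (\<Sum>u\<in>{u\<in>S. l u > 0}. f u) + (\<Sum>u\<in>{u\<in>S. l u < 0}. f u) + (\<Sum>u\<in>{u\<in>S. l u = 0}. f u)"
proof -
  have "(\<Sum>u\<in>S. f u) = (\<Sum>u\<in>S. (if l u > 0 then f u else 0) + (if l u < 0 then f u else 0) + (if l u = 0 then f u else 0))"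
    by (rule sum.cong) auto
  also have "\<dots> = (\<Sum>u\<in>{u\<in>S. l u > 0}. f u) + (\<Sum>u\<in>{u\<in>S. l u < 0}. f u) + (\<Sum>u\<in>{u\<in>S. l u = 0}. f u)"
    using assms by (simp add: sum.distrib sum.inter_filter)
  finally show ?thesis .
qed

lemma mean_algebra:
  fixes S :: "'v :: real_vector set" and D l :: "'v \<Rightarrow> real"
  assumes fin: "finite S" and Dnn: "\<And>u. 0 \<le> D u" and mean: "(\<Sum>u\<in>S. D u *\<^sub>R u) = p"
    and lz: "(\<Sum>u\<in>S. D u * l u) = 0" and C: "C > 0"
    and M: "(\<Sum>u\<in>S. if l u \<noteq> 0 then D u else 0) \<noteq> 0"
  defines "cc \<equiv> \<lambda>u1 u2. if 0 < l u1 \<and> l u2 < 0 then (l u1 - l u2) / C else 0"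
    and "z \<equiv> \<lambda>u1 u2. (1 / (l u1 - l u2)) *\<^sub>R ((- l u2) *\<^sub>R u1 + l u1 *\<^sub>R u2)"
  shows "(\<Sum>u1\<in>S. \<Sum>u2\<in>S. D u1 * D u2 * cc u1 u2) > 0"
    "(\<Sum>u\<in>S. if l u = 0 then D u *\<^sub>R u else 0) +
      ((\<Sum>u\<in>S. if l u \<noteq> 0 then D u else 0) / (\<Sum>u1\<in>S. \<Sum>u2\<in>S. D u1 * D u2 * cc u1 u2)) *\<^sub>R
      (\<Sum>u1\<in>S. \<Sum>u2\<in>S. (D u1 * D u2 * cc u1 u2) *\<^sub>R z u1 u2) = p"
proof -
  define Sp where "Sp = {u\<in>S. l u > 0}"
  define Sm where "Sm = {u\<in>S. l u < 0}"
  define Sz where "Sz = {u\<in>S. l u = 0}"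
  have finS: "finite Sp" "finite Sm" "finite Sz" using fin by (auto simp: Sp_def Sm_def Sz_def)
  define \<sigma> where "\<sigma> = (\<Sum>u\<in>Sp. D u * l u)"
  define Mp where "Mp = (\<Sum>u\<in>Sp. D u)"
  define Mm where "Mm = (\<Sum>u\<in>Sm. D u)"
  define Ep where "Ep = (\<Sum>u\<in>Sp. D u *\<^sub>R u)"
  define Em where "Em = (\<Sum>u\<in>Sm. D u *\<^sub>R u)"
  define E0 where "E0 = (\<Sum>u\<in>S. if l u = 0 then D u *\<^sub>R u else 0)"
  define MM where "MM = (\<Sum>u\<in>S. if l u \<noteq> 0 then D u else 0)"
  have E0': "E0 = (\<Sum>u\<in>Sz. D u *\<^sub>R u)" unfolding E0_def Sz_def using fin by (simp add: sum.inter_filter)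
  have szl: "(\<Sum>u\<in>Sz. D u * l u) = 0" unfolding Sz_def by simp
  have sig: "(\<Sum>u\<in>Sm. D u * (- l u)) = \<sigma>"
  proof -
    have "0 = (\<Sum>u\<in>Sp. D u * l u) + (\<Sum>u\<in>Sm. D u * l u) + (\<Sum>u\<in>Sz. D u * l u)"
      using lz sum_split3[OF fin, of "\<lambda>u. D u * l u" l] by (simp add: Sp_def Sm_def Sz_def)
    then show ?thesis using szl by (simp add: \<sigma>_def sum_negf)
  qed
  have pE: "p = Ep + Em + E0"
    using mean sum_split3[OF fin, of "\<lambda>u. D u *\<^sub>R u" l] by (simp add: Ep_def Em_def E0' Sp_def Sm_def Sz_def)
  have MMs: "MM = Mp + Mm"
  proof -
    have "MM = (\<Sum>u\<in>Sp. if l u \<noteq> 0 then D u else 0) + (\<Sum>u\<in>Sm. if l u \<noteq> 0 then D u else 0) + (\<Sum>u\<in>Sz. if l u \<noteq> 0 then D u else 0)"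
      unfolding MM_def using sum_split3[OF fin, of "\<lambda>u. if l u \<noteq> 0 then D u else 0" l] by (simp add: Sp_def Sm_def Sz_def)
    also have "\<dots> = Mp + Mm" unfolding Mp_def Mm_def Sp_def Sm_def Sz_def
      by (simp add: sum.cong[OF refl, of _ "\<lambda>u. if l u \<noteq> 0 then D u else 0" D])
    finally show ?thesis .
  qed
  have W: "(\<Sum>u1\<in>S. \<Sum>u2\<in>S. D u1 * D u2 * cc u1 u2) = \<sigma> * MM / C"
  proof -
    have "(\<Sum>u1\<in>S. \<Sum>u2\<in>S. D u1 * D u2 * cc u1 u2)
        = (\<Sum>u1\<in>S. \<Sum>u2\<in>S. if 0 < l u1 \<and> l u2 < 0 then D u1 * D u2 * ((l u1 - l u2) / C) else 0)"
      unfolding cc_def by (intro sum.cong) auto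
    also have "\<dots> = (\<Sum>u1\<in>Sp. \<Sum>u2\<in>Sm. D u1 * D u2 * ((l u1 - l u2) / C))"
      unfolding Sp_def Sm_def by (rule double_filter_sum[OF fin])
    also have "\<dots> = (1 / C) * ((\<Sum>u1\<in>Sp. \<Sum>u2\<in>Sm. (D u1 * l u1) * D u2) + (\<Sum>u1\<in>Sp. \<Sum>u2\<in>Sm. D u1 * (D u2 * (- l u2))))"
      by (simp add: sum_distrib_left sum.distrib[symmetric] algebra_simps diff_divide_distrib)
    also have "\<dots> = (1 / C) * ((\<Sum>u1\<in>Sp. D u1 * l u1) * (\<Sum>u2\<in>Sm. D u2) + (\<Sum>u1\<in>Sp. D u1) * (\<Sum>u2\<in>Sm. D u2 * (- l u2)))"
      by (simp only: sum_product)
    also have "\<dots> = \<sigma> * MM / C" using sig by (simp add: \<sigma>_def Mp_def Mm_def MMs algebra_simps add_divide_distrib)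
    finally show ?thesis .
  qed
  have p1: "(\<Sum>u1\<in>Sp. \<Sum>u2\<in>Sm. (D u1 * D u2 * (- l u2)) *\<^sub>R u1) = (\<Sum>u2\<in>Sm. D u2 * (- l u2)) *\<^sub>R Ep"
  proof -
    have "(\<Sum>u1\<in>Sp. \<Sum>u2\<in>Sm. (D u1 * D u2 * (- l u2)) *\<^sub>R u1) = (\<Sum>u1\<in>Sp. (\<Sum>u2\<in>Sm. D u2 * (- l u2)) *\<^sub>R (D u1 *\<^sub>R u1))"
    proof (rule sum.cong[OF refl])
      fix u1
      have "(\<Sum>u2\<in>Sm. (D u1 * D u2 * (- l u2)) *\<^sub>R u1) = (\<Sum>u2\<in>Sm. D u1 * (D u2 * (- l u2))) *\<^sub>R u1"
        by (simp only: scaleR_sum_left mult.assoc)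
      also have "(\<Sum>u2\<in>Sm. D u1 * (D u2 * (- l u2))) = D u1 * (\<Sum>u2\<in>Sm. D u2 * (- l u2))"
        by (simp only: sum_distrib_left)
      finally show "(\<Sum>u2\<in>Sm. (D u1 * D u2 * (- l u2)) *\<^sub>R u1) = (\<Sum>u2\<in>Sm. D u2 * (- l u2)) *\<^sub>R (D u1 *\<^sub>R u1)"
        by simp
    qed
    also have "\<dots> = (\<Sum>u2\<in>Sm. D u2 * (- l u2)) *\<^sub>R Ep" by (simp add: Ep_def scaleR_sum_right)
    finally show ?thesis .
  qed
  have p2: "(\<Sum>u1\<in>Sp. \<Sum>u2\<in>Sm. (D u1 * D u2 * l u1) *\<^sub>R u2) = (\<Sum>u1\<in>Sp. D u1 * l u1) *\<^sub>R Em"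
  proof -
    have "(\<Sum>u1\<in>Sp. \<Sum>u2\<in>Sm. (D u1 * D u2 * l u1) *\<^sub>R u2) = (\<Sum>u1\<in>Sp. (D u1 * l u1) *\<^sub>R Em)"
      by (rule sum.cong[OF refl]) (simp add: Em_def scaleR_sum_right mult.commute mult.left_commute)
    also have "\<dots> = (\<Sum>u1\<in>Sp. D u1 * l u1) *\<^sub>R Em" by (simp add: scaleR_sum_left)
    finally show ?thesis .
  qed
  have X: "(\<Sum>u1\<in>S. \<Sum>u2\<in>S. (D u1 * D u2 * cc u1 u2) *\<^sub>R z u1 u2) = (\<sigma> / C) *\<^sub>R (Ep + Em)"
  proof -
    have "(\<Sum>u1\<in>S. \<Sum>u2\<in>S. (D u1 * D u2 * cc u1 u2) *\<^sub>R z u1 u2)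
        = (\<Sum>u1\<in>S. \<Sum>u2\<in>S. if 0 < l u1 \<and> l u2 < 0 then (1 / C) *\<^sub>R ((D u1 * D u2 * (- l u2)) *\<^sub>R u1 + (D u1 * D u2 * l u1) *\<^sub>R u2) else 0)"
    proof (intro sum.cong refl)
      fix u1 u2
      show "(D u1 * D u2 * cc u1 u2) *\<^sub>R z u1 u2 = (if 0 < l u1 \<and> l u2 < 0 then (1 / C) *\<^sub>R ((D u1 * D u2 * (- l u2)) *\<^sub>R u1 + (D u1 * D u2 * l u1) *\<^sub>R u2) else 0)"
      proof (cases "0 < l u1 \<and> l u2 < 0")
        case True
        then have ne: "l u1 - l u2 \<noteq> 0" by simp
        have "(D u1 * D u2 * cc u1 u2) *\<^sub>R z u1 u2 = (D u1 * D u2 * ((l u1 - l u2) / C) * (1 / (l u1 - l u2))) *\<^sub>R ((- l u2) *\<^sub>R u1 + l u1 *\<^sub>R u2)"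
          using True by (simp add: cc_def z_def)
        also have "D u1 * D u2 * ((l u1 - l u2) / C) * (1 / (l u1 - l u2)) = D u1 * D u2 / C"
          using ne C by (simp add: field_simps)
        finally show ?thesis using True by (simp add: scaleR_add_right algebra_simps)
      next
        case False
        then have "cc u1 u2 = 0" unfolding cc_def by (simp only: if_False)
        then show ?thesis using False by auto
      qed
    qed
    also have "\<dots> = (\<Sum>u1\<in>Sp. \<Sum>u2\<in>Sm. (1 / C) *\<^sub>R ((D u1 * D u2 * (- l u2)) *\<^sub>R u1 + (D u1 * D u2 * l u1) *\<^sub>R u2))"
      unfolding Sp_def Sm_def by (rule double_filter_sum[OF fin])
    also have "\<dots> = (1 / C) *\<^sub>R ((\<Sum>u1\<in>Sp. \<Sum>u2\<in>Sm. (D u1 * D u2 * (- l u2)) *\<^sub>R u1) + (\<Sum>u1\<in>Sp. \<Sum>u2\<in>Sm. (D u1 * D u2 * l u1) *\<^sub>R u2))"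
      by (simp only: scaleR_add_right scaleR_sum_right sum.distrib)
    also have "\<dots> = (1 / C) *\<^sub>R ((\<Sum>u2\<in>Sm. D u2 * (- l u2)) *\<^sub>R Ep + (\<Sum>u1\<in>Sp. D u1 * l u1) *\<^sub>R Em)"
      by (simp only: p1 p2)
    also have "\<dots> = (\<sigma> / C) *\<^sub>R (Ep + Em)" using sig by (simp add: \<sigma>_def scaleR_add_right)
    finally show ?thesis .
  qed
  have MMpos: "MM > 0"
  proof -
    have "MM \<ge> 0" unfolding MM_def by (rule sum_nonneg) (simp add: Dnn)
    then show ?thesis using M MM_def by simp
  qed
  have sigpos: "\<sigma> > 0"
  proof -
    obtain u where u: "u \<in> S" "l u \<noteq> 0" "D u \<noteq> 0"
      using M sum.neutral[of S "\<lambda>u. if l u \<noteq> 0 then D u else 0"] by (metis (mono_tags, lifting))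
    then have Dp: "D u > 0" using Dnn[of u] by simp
    show ?thesis
    proof (cases "l u > 0")
      case True
      then have "u \<in> Sp" using u by (simp add: Sp_def)
      then have "D u * l u \<le> \<sigma>" unfolding \<sigma>_def
        by (rule member_le_sum) (use Dnn finS in \<open>auto simp: Sp_def\<close>)
      moreover have "D u * l u > 0" using Dp True by simp
      ultimately show ?thesis by simp
    next
      case False
      then have "l u < 0" using u by simp
      then have "u \<in> Sm" using u by (simp add: Sm_def)
      then have "D u * (- l u) \<le> \<sigma>" unfolding sig[symmetric]
        by (rule member_le_sum) (use Dnn finS in \<open>auto simp: Sm_def intro!: mult_nonneg_nonpos\<close>)
      moreover have "D u * (- l u) > 0" using Dp \<open>l u < 0\<close> by (simp add: mult_pos_neg)
      ultimately show ?thesis by simp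
    qed
  qed
  show "(\<Sum>u1\<in>S. \<Sum>u2\<in>S. D u1 * D u2 * cc u1 u2) > 0" unfolding W using sigpos MMpos C by simp
  show "(\<Sum>u\<in>S. if l u = 0 then D u *\<^sub>R u else 0) +
      ((\<Sum>u\<in>S. if l u \<noteq> 0 then D u else 0) / (\<Sum>u1\<in>S. \<Sum>u2\<in>S. D u1 * D u2 * cc u1 u2)) *\<^sub>R
      (\<Sum>u1\<in>S. \<Sum>u2\<in>S. (D u1 * D u2 * cc u1 u2) *\<^sub>R z u1 u2) = p"
    unfolding W X E0_def[symmetric] MM_def[symmetric] pE using sigpos MMpos C
    by (simp add: scaleR_add_right)
qed

definition ell :: "real ^ 'n \<Rightarrow> real \<Rightarrow> real ^ 'n \<Rightarrow> real" where
  "ell a \<beta> x = a \<bullet> x - \<beta>"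

definition zpt :: "real ^ 'n \<Rightarrow> real \<Rightarrow> real ^ 'n \<Rightarrow> real ^ 'n \<Rightarrow> real ^ 'n" where
  "zpt a \<beta> u1 u2 = (1 / (ell a \<beta> u1 - ell a \<beta> u2)) *\<^sub>R ((- ell a \<beta> u2) *\<^sub>R u1 + ell a \<beta> u1 *\<^sub>R u2)"

definition ccf :: "real ^ 'n \<Rightarrow> real \<Rightarrow> real \<Rightarrow> real ^ 'n \<Rightarrow> real ^ 'n \<Rightarrow> real" where
  "ccf a \<beta> C u1 u2 = (if 0 < ell a \<beta> u1 \<and> ell a \<beta> u2 < 0 then (ell a \<beta> u1 - ell a \<beta> u2) / C else 0)"

definition innerT :: "real ^ 'n \<Rightarrow> real \<Rightarrow> real \<Rightarrow> real ^ 'n \<Rightarrow> real ^ 'n \<Rightarrow> ('n, (real ^ 'n) option) gt" where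
  "innerT a \<beta> C u1 u2 = gbern (ccf a \<beta> C u1 u2) (Some (zpt a \<beta> u1 u2)) None"

definition body0T :: "real ^ 'n \<Rightarrow> real \<Rightarrow> real \<Rightarrow> ('n, real ^ 'n) gt \<Rightarrow> ('n, (real ^ 'n) option) gt" where
  "body0T a \<beta> C t = gbind t (\<lambda>u1. gbind t (innerT a \<beta> C u1))"

definition bodyT :: "real ^ 'n \<Rightarrow> real \<Rightarrow> real \<Rightarrow> ('n, real ^ 'n) gt \<Rightarrow> ('n, (real ^ 'n) option) gt" where
  "bodyT a \<beta> C t = gnode (GK (1/2)) (body0T a \<beta> C t) (body0T a \<beta> C t)"

definition stepT :: "real ^ 'n \<Rightarrow> real \<Rightarrow> real \<Rightarrow> ('n, real ^ 'n) gt \<Rightarrow> ('n, real ^ 'n) gt" where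
  "stepT a \<beta> C t = gbind t (\<lambda>u. if ell a \<beta> u = 0 then gleaf u else gloop (bodyT a \<beta> C t))"

definition Cb :: "real ^ 'n \<Rightarrow> real \<Rightarrow> real" where
  "Cb a \<beta> = 1 + 2 * (\<Sum>i\<in>UNIV. \<bar>a $ i\<bar>) + 2 * \<bar>\<beta>\<bar>"

definition sampler :: "(real ^ 'n) set \<Rightarrow> ('n, real ^ 'n) gt \<Rightarrow> bool" where
  "sampler P t \<longleftrightarrow> gwf t \<and> (\<forall>p\<in>P. incube p \<and> (\<exists>S D. realizes t p S D \<and>
      (\<forall>u\<in>S. D u \<noteq> 0 \<longrightarrow> u \<in> P) \<and> (\<Sum>u\<in>S. D u *\<^sub>R u) = p))"

lemma lin_aux: "\<bar>B\<bar> \<le> (S::real) \<Longrightarrow> 2 * \<bar>B - \<beta>\<bar> < 1 + 2 * S + 2 * \<bar>\<beta>\<bar>"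
  by (auto simp: abs_if split: if_split_asm)

lemma ell_bound:
  assumes "incube x"
  shows "2 * \<bar>ell a \<beta> x\<bar> < Cb a \<beta>"
proof -
  have "\<bar>a \<bullet> x\<bar> = \<bar>\<Sum>i\<in>UNIV. a $ i * x $ i\<bar>" by (simp add: inner_vec_def)
  also have "\<dots> \<le> (\<Sum>i\<in>UNIV. \<bar>a $ i * x $ i\<bar>)" by (rule sum_abs)
  also have "\<dots> \<le> (\<Sum>i\<in>UNIV. \<bar>a $ i\<bar>)"
  proof (rule sum_mono)
    fix i
    have "\<bar>x $ i\<bar> \<le> 1" using assms by (auto simp: incube_def)
    then show "\<bar>a $ i * x $ i\<bar> \<le> \<bar>a $ i\<bar>"
      by (simp add: abs_mult mult_left_le)
  qed
  finally have "\<bar>a \<bullet> x\<bar> \<le> (\<Sum>i\<in>UNIV. \<bar>a $ i\<bar>)" .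
  then show ?thesis unfolding ell_def Cb_def by (rule lin_aux)
qed

lemma Cb_pos: "Cb a \<beta> > 0"
proof -
  have "(\<Sum>i\<in>UNIV. \<bar>a $ i\<bar>) \<ge> 0" by (rule sum_nonneg) simp
  then show ?thesis unfolding Cb_def by linarith
qed

lemma ccf_range:
  assumes "incube u1" "incube u2"
  shows "0 \<le> ccf a \<beta> (Cb a \<beta>) u1 u2 \<and> ccf a \<beta> (Cb a \<beta>) u1 u2 \<le> 1"
proof -
  have "2 * \<bar>ell a \<beta> u1\<bar> < Cb a \<beta>" "2 * \<bar>ell a \<beta> u2\<bar> < Cb a \<beta>" using ell_bound assms by blast+
  then have "ell a \<beta> u1 - ell a \<beta> u2 \<le> Cb a \<beta>" by linarith
  then show ?thesis using Cb_pos[of a \<beta>] by (auto simp: ccf_def divide_le_eq_1)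
qed

lemma zpt_props:
  assumes "convex P" "u1 \<in> P" "u2 \<in> P" "0 < ell a \<beta> u1" "ell a \<beta> u2 < 0"
  shows "zpt a \<beta> u1 u2 \<in> P" "a \<bullet> zpt a \<beta> u1 u2 = \<beta>"
proof -
  define l1 l2 where "l1 = ell a \<beta> u1" and "l2 = ell a \<beta> u2"
  have d: "l1 - l2 > 0" using assms(4,5) by (simp add: l1_def l2_def)
  have z: "zpt a \<beta> u1 u2 = (- l2 / (l1 - l2)) *\<^sub>R u1 + (l1 / (l1 - l2)) *\<^sub>R u2"
    by (simp add: zpt_def l1_def l2_def scaleR_add_right scaleR_right_diff_distrib)
  show "zpt a \<beta> u1 u2 \<in> P" unfolding z
  proof (rule convexD[OF assms(1-3)])
    show "0 \<le> - l2 / (l1 - l2)" using d assms(5) unfolding l2_def[symmetric] by (intro divide_nonneg_pos) auto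
    show "0 \<le> l1 / (l1 - l2)" using d assms(4) by (simp add: l1_def)
    have ne: "l1 - l2 \<noteq> 0" using d by simp
    have "- l2 / (l1 - l2) + l1 / (l1 - l2) = (- l2 + l1) / (l1 - l2)" by (rule add_divide_distrib[symmetric])
    also have "- l2 + l1 = l1 - l2" by simp
    finally show "- l2 / (l1 - l2) + l1 / (l1 - l2) = 1" using ne by simp
  qed
  have "a \<bullet> zpt a \<beta> u1 u2 = (- l2 / (l1 - l2)) * (a \<bullet> u1) + (l1 / (l1 - l2)) * (a \<bullet> u2)"
    unfolding z by (simp only: inner_add_right inner_scaleR_right)
  also have "\<dots> = (- l2 / (l1 - l2)) * (l1 + \<beta>) + (l1 / (l1 - l2)) * (l2 + \<beta>)"
    by (simp add: l1_def l2_def ell_def)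
  also have "\<dots> = ((- l2) * (l1 + \<beta>) + l1 * (l2 + \<beta>)) / (l1 - l2)"
    by (simp only: times_divide_eq_left add_divide_distrib)
  also have "(- l2) * (l1 + \<beta>) + l1 * (l2 + \<beta>) = \<beta> * (l1 - l2)" by (simp add: algebra_simps)
  also have "\<beta> * (l1 - l2) / (l1 - l2) = \<beta>" using d by simp
  finally show "a \<bullet> zpt a \<beta> u1 u2 = \<beta>" .
qed

lemma swap_mean:
  fixes E :: "'a \<Rightarrow> 'b \<Rightarrow> real" and y :: "'b \<Rightarrow> 'v::real_vector"
  shows "(\<Sum>x\<in>T. (\<Sum>u\<in>S. D u * E u x) *\<^sub>R y x) = (\<Sum>u\<in>S. D u *\<^sub>R (\<Sum>x\<in>T. E u x *\<^sub>R y x))"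
  by (simp add: scaleR_sum_left scaleR_sum_right sum.swap[of _ T S])

lemma delta_mean:
  assumes "finite T" "u \<in> T"
  shows "(\<Sum>y\<in>T. (if y = u then 1 else 0) *\<^sub>R (y :: 'v::real_vector)) = u"
proof -
  have "(\<Sum>y\<in>T. (if y = u then 1 else 0) *\<^sub>R y) = (\<Sum>y\<in>T. if y = u then y else 0)"
    by (rule sum.cong) auto
  then show ?thesis using assms by (simp add: sum.delta')
qed


lemma gwf_innerT: "gwf (innerT a \<beta> C u1 u2)"
  unfolding innerT_def by (rule gwf_gbern)

lemma gwf_body0T: "gwf t \<Longrightarrow> gwf (body0T a \<beta> C t)"
  unfolding body0T_def by (intro gwf_gbind gwf_innerT)

lemma gwf_bodyT: "gwf t \<Longrightarrow> gwf (bodyT a \<beta> C t)"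
  unfolding bodyT_def by (intro gwf_gnode gwf_body0T) auto

lemma gint_bodyT: "gint (bodyT a \<beta> C t [])"
  unfolding bodyT_def by simp

lemma gwf_stepT: "gwf t \<Longrightarrow> gwf (stepT a \<beta> C t)"
  unfolding stepT_def by (intro gwf_gbind) (auto intro: gwf_gloop gwf_bodyT gint_bodyT)

lemma sum_pos_witness:
  assumes "finite S" "\<And>u. 0 \<le> D u" "u \<in> S" "D u \<noteq> 0" "l u \<noteq> (0::real)"
  shows "(\<Sum>u\<in>S. if l u \<noteq> 0 then D u else 0) \<noteq> (0::real)"
proof -
  have "D u \<le> (\<Sum>u\<in>S. if l u \<noteq> 0 then D u else 0)"
    using member_le_sum[of u S "\<lambda>u. if l u \<noteq> 0 then D u else 0"] assms by auto
  moreover have "D u > 0" using assms(2)[of u] assms(4) by simp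
  ultimately show ?thesis by simp
qed


lemma sampler_step:
  assumes smp: "sampler P t" and cv: "convex P"
  shows "sampler (P \<inter> {x. a \<bullet> x = \<beta>}) (stepT a \<beta> (Cb a \<beta>) t)"
  unfolding sampler_def
proof (intro conjI ballI)
  define C where "C = Cb a \<beta>"
  define l where "l = ell a \<beta>"
  have wt: "gwf t" using smp by (simp add: sampler_def)
  show "gwf (stepT a \<beta> (Cb a \<beta>) t)" using gwf_stepT[OF wt] .
  fix p assume pH: "p \<in> P \<inter> {x. a \<bullet> x = \<beta>}"
  then have pP: "p \<in> P" and pb: "a \<bullet> p = \<beta>" by auto
  have Pc: "\<And>x. x \<in> P \<Longrightarrow> incube x" using smp by (simp add: sampler_def)
  have pc: "incube p" using Pc[OF pP] .
  show "incube p" using pc .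
  from smp pP obtain S D where r: "realizes t p S D" and supp: "\<forall>u\<in>S. D u \<noteq> 0 \<longrightarrow> u \<in> P"
    and mean: "(\<Sum>u\<in>S. D u *\<^sub>R u) = p"
    unfolding sampler_def by blast
  have fin: "finite S" using r by (simp add: realizes_def)
  have zS: "\<And>u. u \<notin> S \<Longrightarrow> D u = 0" using r by (simp add: realizes_def)
  have Dnn: "\<And>u. 0 \<le> D u" using realizes_nonneg[OF r pc wt] .
  have sum1: "(\<Sum>u\<in>S. D u) = 1" using realizes_sum1[OF r pc wt] .
  have uc: "\<And>u. u \<in> S \<Longrightarrow> D u \<noteq> 0 \<Longrightarrow> incube u" using supp Pc by blast
  define DI where "DI u1 u2 x = (if x = Some (zpt a \<beta> u1 u2) then ccf a \<beta> C u1 u2 else 0)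
      + (if x = None then 1 - ccf a \<beta> C u1 u2 else 0)" for u1 u2 x
  have rI: "realizes (innerT a \<beta> C u1 u2) p {Some (zpt a \<beta> u1 u2), None} (DI u1 u2)"
    if "incube u1" "incube u2" for u1 u2
    unfolding innerT_def DI_def[abs_def] using ccf_range[OF that, of a \<beta>]
    by (intro realizes_gbern) (auto simp: C_def)
  define S2 where "S2 u1 = (\<Union>u2\<in>{u2\<in>S. D u2 \<noteq> 0}. {Some (zpt a \<beta> u1 u2), None})" for u1
  define D2 where "D2 u1 x = (\<Sum>u2\<in>S. D u2 * DI u1 u2 x)" for u1 x
  have r2: "realizes (gbind t (innerT a \<beta> C u1)) p (S2 u1) (D2 u1)" if u1: "incube u1" for u1
    unfolding S2_def D2_def
  proof (rule realizes_gbind[OF pc wt _ r])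
    show "gwf (innerT a \<beta> C u1 u2)" for u2 by (rule gwf_innerT)
    show "realizes (innerT a \<beta> C u1 u2) p {Some (zpt a \<beta> u1 u2), None} (DI u1 u2)"
      if "u2 \<in> S" "D u2 \<noteq> 0" for u2
      using rI[OF u1 uc[OF that]] .
  qed
  define SB where "SB = (\<Union>u1\<in>{u1\<in>S. D u1 \<noteq> 0}. S2 u1)"
  define DB where "DB x = (\<Sum>u1\<in>S. D u1 * D2 u1 x)" for x
  have rB0: "realizes (body0T a \<beta> C t) p SB DB"
    unfolding SB_def DB_def body0T_def
  proof (rule realizes_gbind[OF pc wt _ r])
    show "gwf (gbind t (innerT a \<beta> C u1))" for u1 by (intro gwf_gbind wt gwf_innerT)
    show "realizes (gbind t (innerT a \<beta> C u1)) p (S2 u1) (D2 u1)" if "u1 \<in> S" "D u1 \<noteq> 0" for u1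
      using r2[OF uc[OF that]] .
  qed
  have finSB: "finite SB" using rB0 by (simp add: realizes_def)
  have rB: "realizes (bodyT a \<beta> C t) p SB DB"
  proof -
    have "realizes (bodyT a \<beta> C t) p (SB \<union> SB)
        (\<lambda>x. (1 - gcp p (GK (1/2) :: ('a, (real ^ 'a) option) gn)) * DB x + gcp p (GK (1/2) :: ('a, (real ^ 'a) option) gn) * DB x)"
      unfolding bodyT_def by (rule realizes_gnode[OF _ rB0 rB0]) simp
    then show ?thesis by (rule realizes_cong) (use finSB in auto)
  qed
  define W where "W = (\<Sum>u1\<in>S. \<Sum>u2\<in>S. D u1 * D u2 * ccf a \<beta> C u1 u2)"
  have RW: "DB None = 1 - W"
  proof -
    have "DB None = (\<Sum>u1\<in>S. D u1 * (\<Sum>u2\<in>S. D u2 * (1 - ccf a \<beta> C u1 u2)))"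
      by (simp add: DB_def D2_def DI_def)
    also have "\<dots> = (\<Sum>u1\<in>S. D u1 * (1 - (\<Sum>u2\<in>S. D u2 * ccf a \<beta> C u1 u2)))"
      by (simp add: right_diff_distrib sum_subtractf sum1)
    also have "\<dots> = 1 - W"
      by (simp add: W_def right_diff_distrib sum_subtractf sum1 sum_distrib_left mult.assoc)
    finally show ?thesis .
  qed
  have lz: "(\<Sum>u\<in>S. D u * l u) = 0"
  proof -
    have "(\<Sum>u\<in>S. D u * l u) = (\<Sum>u\<in>S. D u * (a \<bullet> u)) - (\<Sum>u\<in>S. D u) * \<beta>"
      by (simp add: l_def ell_def right_diff_distrib sum_subtractf sum_distrib_right)
    also have "(\<Sum>u\<in>S. D u * (a \<bullet> u)) = a \<bullet> (\<Sum>u\<in>S. D u *\<^sub>R u)"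
      by (simp add: inner_sum_right)
    finally show ?thesis using mean pb sum1 by simp
  qed
  define M where "M = (\<Sum>u\<in>S. if l u \<noteq> 0 then D u else 0)"
  define X where "X = (\<Sum>u1\<in>S. \<Sum>u2\<in>S. (D u1 * D u2 * ccf a \<beta> C u1 u2) *\<^sub>R zpt a \<beta> u1 u2)"
  define E0 where "E0 = (\<Sum>u\<in>S. if l u = 0 then D u *\<^sub>R u else 0)"
  have MA: "W > 0 \<and> E0 + (M / W) *\<^sub>R X = p" if "M \<noteq> 0"
    using mean_algebra[OF fin Dnn mean lz Cb_pos[of a \<beta>] that[unfolded M_def]]
    unfolding W_def X_def E0_def M_def ccf_def zpt_def C_def l_def by simp
  define DL where "DL y = DB (Some y) / (1 - DB None)" for y
  have rL: "realizes (gloop (bodyT a \<beta> C t)) p (Some -` SB) DL" if "M \<noteq> 0"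
  proof -
    have "DB None < 1" using MA[OF that] RW by simp
    then show ?thesis unfolding DL_def[abs_def]
      by (rule realizes_gloop[OF pc gwf_bodyT[OF wt] gint_bodyT rB])
  qed
  define E where "E u y = (if l u = 0 then (if y = u then 1 else 0) else DL y)" for u y
  define Su where "Su u = (if l u = 0 then {u} else Some -` SB)" for u
  define S' where "S' = (\<Union>u\<in>{u\<in>S. D u \<noteq> 0}. Su u)"
  define D' where "D' y = (\<Sum>u\<in>S. D u * E u y)" for y
  have rT: "realizes (stepT a \<beta> C t) p S' D'"
    unfolding stepT_def S'_def D'_def
  proof (rule realizes_gbind[OF pc wt _ r])
    show "gwf (if ell a \<beta> u = 0 then gleaf u else gloop (bodyT a \<beta> C t))" for u
      by (auto intro: gwf_gloop gwf_bodyT[OF wt] gint_bodyT)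
    show "realizes (if ell a \<beta> u = 0 then gleaf u else gloop (bodyT a \<beta> C t)) p (Su u) (E u)"
      if u: "u \<in> S" "D u \<noteq> 0" for u
    proof (cases "l u = 0")
      case True
      then show ?thesis using realizes_gleaf[of u p] by (simp add: l_def Su_def E_def[abs_def])
    next
      case False
      have "M \<noteq> 0" unfolding M_def by (rule sum_pos_witness[where l=l and D=D and S=S and u=u, OF fin Dnn u False])
      then show ?thesis using rL False by (simp add: l_def Su_def E_def[abs_def])
    qed
  qed
  show "\<exists>S D. realizes (stepT a \<beta> (Cb a \<beta>) t) p S D \<and> (\<forall>u\<in>S. D u \<noteq> 0 \<longrightarrow> u \<in> P \<inter> {x. a \<bullet> x = \<beta>}) \<and>
          (\<Sum>u\<in>S. D u *\<^sub>R u) = p"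
  proof (intro exI conjI)
    show "realizes (stepT a \<beta> (Cb a \<beta>) t) p S' D'" using rT by (simp add: C_def)
    show "\<forall>y\<in>S'. D' y \<noteq> 0 \<longrightarrow> y \<in> P \<inter> {x. a \<bullet> x = \<beta>}"
    proof (intro ballI impI)
      fix y assume "y \<in> S'" "D' y \<noteq> 0"
      then obtain u where u: "u \<in> S" "D u * E u y \<noteq> 0"
        unfolding D'_def by (meson sum.not_neutral_contains_not_neutral)
      then have Du: "D u \<noteq> 0" and Eu: "E u y \<noteq> 0" by auto
      show "y \<in> P \<inter> {x. a \<bullet> x = \<beta>}"
      proof (cases "l u = 0")
        case True
        then have "y = u" using Eu by (simp add: E_def split: if_splits)
        then show ?thesis using True supp u(1) Du by (simp add: l_def ell_def)
      next
        case False
        then have "DB (Some y) \<noteq> 0" using Eu by (simp add: E_def DL_def)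
        then obtain u1 where u1: "u1 \<in> S" "D u1 * D2 u1 (Some y) \<noteq> 0"
          unfolding DB_def by (meson sum.not_neutral_contains_not_neutral)
        have "D2 u1 (Some y) \<noteq> 0" using u1(2) by auto
        then obtain u2 where u2: "u2 \<in> S" "D u2 * DI u1 u2 (Some y) \<noteq> 0"
          unfolding D2_def by (meson sum.not_neutral_contains_not_neutral)
        have D12: "D u1 \<noteq> 0" "D u2 \<noteq> 0" using u1 u2 by auto
        have DIne: "DI u1 u2 (Some y) \<noteq> 0" using u2 by simp
        then have yz: "y = zpt a \<beta> u1 u2" and cne: "ccf a \<beta> C u1 u2 \<noteq> 0"
          by (auto simp: DI_def split: if_splits)
        then have cnd: "0 < ell a \<beta> u1" "ell a \<beta> u2 < 0" by (auto simp: ccf_def split: if_splits)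
        have "u1 \<in> P" "u2 \<in> P" using supp u1(1) u2(1) D12 by auto
        then show ?thesis using zpt_props[OF cv _ _ cnd] yz by auto
      qed
    qed
    show "(\<Sum>y\<in>S'. D' y *\<^sub>R y) = p"
    proof -
      have finS': "finite S'" using rT by (simp add: realizes_def)
      define mL where "mL = (\<Sum>y\<in>S'. DL y *\<^sub>R y)"
      have step1: "(\<Sum>y\<in>S'. D' y *\<^sub>R y) = (\<Sum>u\<in>S. D u *\<^sub>R (\<Sum>y\<in>S'. E u y *\<^sub>R y))"
        unfolding D'_def by (rule swap_mean)
      have step2: "(\<Sum>u\<in>S. D u *\<^sub>R (\<Sum>y\<in>S'. E u y *\<^sub>R y)) = (\<Sum>u\<in>S. D u *\<^sub>R (if l u = 0 then u else mL))"
      proof (rule sum.cong[OF refl])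
        fix u assume u: "u \<in> S"
        show "D u *\<^sub>R (\<Sum>y\<in>S'. E u y *\<^sub>R y) = D u *\<^sub>R (if l u = 0 then u else mL)"
        proof (cases "D u = 0")
          case True then show ?thesis by simp
        next
          case False
          show ?thesis
          proof (cases "l u = 0")
            case True
            have "u \<in> S'" using u False True by (auto simp: S'_def Su_def)
            have "(\<Sum>y\<in>S'. E u y *\<^sub>R y) = (\<Sum>y\<in>S'. (if y = u then 1 else 0) *\<^sub>R y)"
              using True by (simp add: E_def)
            also have "\<dots> = u" by (rule delta_mean[OF finS' \<open>u \<in> S'\<close>])
            finally show ?thesis using True by simp
          next
            case F2: False
            then show ?thesis by (simp add: E_def mL_def)
          qed
        qed
      qed
      have step3: "(\<Sum>u\<in>S. D u *\<^sub>R (if l u = 0 then u else mL)) = E0 + M *\<^sub>R mL"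
      proof -
        have "(\<Sum>u\<in>S. D u *\<^sub>R (if l u = 0 then u else mL))
            = (\<Sum>u\<in>S. (if l u = 0 then D u *\<^sub>R u else 0) + (if l u \<noteq> 0 then D u else 0) *\<^sub>R mL)"
          by (rule sum.cong) auto
        also have "\<dots> = E0 + M *\<^sub>R mL"
          by (simp add: sum.distrib E0_def M_def scaleR_sum_left)
        finally show ?thesis .
      qed
      show ?thesis
      proof (cases "M = 0")
        case True
        have z: "\<forall>u\<in>S. (if l u \<noteq> 0 then D u else 0) = 0"
          using True unfolding M_def by (subst sum_nonneg_eq_0_iff[OF fin, symmetric]) (auto simp: Dnn)
        have "E0 = (\<Sum>u\<in>S. D u *\<^sub>R u)"
          unfolding E0_def by (rule sum.cong) (use z in auto)
        then show ?thesis using step1 step2 step3 True mean by simp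
      next
        case False
        from MA[OF False] have Wp: "W > 0" and fin_eq: "E0 + (M / W) *\<^sub>R X = p" by auto
        have "(\<Sum>u\<in>S. if l u \<noteq> 0 then D u else 0) \<noteq> 0" using False by (simp add: M_def)
        then obtain u0 where u0': "u0 \<in> S" "(if l u0 \<noteq> 0 then D u0 else 0) \<noteq> 0"
          by (rule sum.not_neutral_contains_not_neutral)
        then have u0: "u0 \<in> S" "D u0 \<noteq> 0" "l u0 \<noteq> 0" by (auto split: if_splits)
        have zin: "zpt a \<beta> u1 u2 \<in> S'" if "u1 \<in> S" "u2 \<in> S" "D u1 \<noteq> 0" "D u2 \<noteq> 0" for u1 u2
        proof -
          have "Some (zpt a \<beta> u1 u2) \<in> SB" using that by (auto simp: SB_def S2_def)
          then have "zpt a \<beta> u1 u2 \<in> Su u0" using u0 by (simp add: Su_def)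
          then show ?thesis using u0 by (auto simp: S'_def)
        qed
        have DIs: "DI u1 u2 (Some y) = (if y = zpt a \<beta> u1 u2 then ccf a \<beta> C u1 u2 else 0)" for u1 u2 y
          by (simp add: DI_def)
        have inner: "(\<Sum>y\<in>S'. DI u1 u2 (Some y) *\<^sub>R y) = (if zpt a \<beta> u1 u2 \<in> S' then ccf a \<beta> C u1 u2 *\<^sub>R zpt a \<beta> u1 u2 else 0)" for u1 u2
        proof -
          have "(\<Sum>y\<in>S'. DI u1 u2 (Some y) *\<^sub>R y) = (\<Sum>y\<in>S'. if y = zpt a \<beta> u1 u2 then ccf a \<beta> C u1 u2 *\<^sub>R zpt a \<beta> u1 u2 else 0)"
            by (rule sum.cong) (auto simp: DIs)
          then show ?thesis using finS' by (simp add: sum.delta')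
        qed
        have XX: "(\<Sum>y\<in>S'. DB (Some y) *\<^sub>R y) = X"
        proof -
          have "(\<Sum>y\<in>S'. DB (Some y) *\<^sub>R y) = (\<Sum>u1\<in>S. D u1 *\<^sub>R (\<Sum>y\<in>S'. D2 u1 (Some y) *\<^sub>R y))"
            unfolding DB_def by (rule swap_mean)
          also have "\<dots> = (\<Sum>u1\<in>S. D u1 *\<^sub>R (\<Sum>u2\<in>S. D u2 *\<^sub>R (\<Sum>y\<in>S'. DI u1 u2 (Some y) *\<^sub>R y)))"
            unfolding D2_def by (simp only: swap_mean)
          also have "\<dots> = (\<Sum>u1\<in>S. \<Sum>u2\<in>S. (D u1 * D u2 * ccf a \<beta> C u1 u2) *\<^sub>R zpt a \<beta> u1 u2)"
          proof (rule sum.cong[OF refl])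
            fix u1 assume u1: "u1 \<in> S"
            show "D u1 *\<^sub>R (\<Sum>u2\<in>S. D u2 *\<^sub>R (\<Sum>y\<in>S'. DI u1 u2 (Some y) *\<^sub>R y))
                = (\<Sum>u2\<in>S. (D u1 * D u2 * ccf a \<beta> C u1 u2) *\<^sub>R zpt a \<beta> u1 u2)"
            proof -
              have "D u1 *\<^sub>R (\<Sum>u2\<in>S. D u2 *\<^sub>R (\<Sum>y\<in>S'. DI u1 u2 (Some y) *\<^sub>R y))
                  = (\<Sum>u2\<in>S. D u1 *\<^sub>R (D u2 *\<^sub>R (\<Sum>y\<in>S'. DI u1 u2 (Some y) *\<^sub>R y)))"
                by (rule scaleR_sum_right)
              also have "\<dots> = (\<Sum>u2\<in>S. (D u1 * D u2 * ccf a \<beta> C u1 u2) *\<^sub>R zpt a \<beta> u1 u2)"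
              proof (rule sum.cong[OF refl])
                fix u2 assume u2: "u2 \<in> S"
                show "D u1 *\<^sub>R D u2 *\<^sub>R (\<Sum>y\<in>S'. DI u1 u2 (Some y) *\<^sub>R y) = (D u1 * D u2 * ccf a \<beta> C u1 u2) *\<^sub>R zpt a \<beta> u1 u2"
                proof (cases "D u1 = 0 \<or> D u2 = 0")
                  case True then show ?thesis by auto
                next
                  case False
                  then have "zpt a \<beta> u1 u2 \<in> S'" using zin u1 u2 by blast
                  then show ?thesis unfolding inner by simp
                qed
              qed
              finally show ?thesis .
            qed
          qed
          finally show ?thesis unfolding X_def .
        qed
        have "mL = (1 / W) *\<^sub>R X"
        proof -
          have "mL = (\<Sum>y\<in>S'. (1 / W) *\<^sub>R (DB (Some y) *\<^sub>R y))"
            unfolding mL_def DL_def RW by (rule sum.cong) (auto simp: divide_inverse)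
          also have "\<dots> = (1 / W) *\<^sub>R X" by (simp only: scaleR_sum_right[symmetric] XX)
          finally show ?thesis .
        qed
        then show ?thesis using step1 step2 step3 fin_eq by simp
      qed
    qed
  qed
qed

lemma cube_eq: "{p :: real ^ 'n. incube p} = cbox 0 1"
  by (auto simp: incube_def mem_box_cart)

lemma cube_sampler: "\<exists>t. sampler {p :: real ^ 'n. incube p} t"
proof -
  obtain xs :: "'n list" where xs: "set xs = UNIV" "distinct xs"
    using finite_distinct_list[of "UNIV :: 'n set"] by auto
  have "sampler {p. incube p} (cubeT xs 0)"
    unfolding sampler_def
  proof (intro conjI ballI)
    show "gwf (cubeT xs 0)" by (rule gwf_cubeT)
    fix p :: "real ^ 'n" assume "p \<in> {p. incube p}"
    then have pc: "incube p" by simp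
    show "incube p" using pc .
    obtain S D where h: "realizes (cubeT xs 0) p S D"
      "(\<Sum>a\<in>S. D a *\<^sub>R a) = (\<chi> j. if j \<in> set xs then p $ j else (0::real^'n) $ j)"
      "\<forall>a\<in>S. D a \<noteq> 0 \<longrightarrow> (\<forall>j. j \<notin> set xs \<longrightarrow> a $ j = (0::real^'n) $ j) \<and> (\<forall>j\<in>set xs. a $ j = 0 \<or> a $ j = 1)"
      using cube_realizes[OF pc xs(2), of 0] by blast
    show "\<exists>S D. realizes (cubeT xs 0) p S D \<and> (\<forall>u\<in>S. D u \<noteq> 0 \<longrightarrow> u \<in> {p. incube p}) \<and> (\<Sum>u\<in>S. D u *\<^sub>R u) = p"
    proof (intro exI conjI)
      show "realizes (cubeT xs 0) p S D" by (rule h(1))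
      show "\<forall>u\<in>S. D u \<noteq> 0 \<longrightarrow> u \<in> {p. incube p}"
      proof (intro ballI impI)
        fix u assume "u \<in> S" "D u \<noteq> 0"
        then have "\<forall>j. u $ j = 0 \<or> u $ j = 1" using h(3) xs(1) by auto
        then have "\<forall>j. 0 \<le> u $ j \<and> u $ j \<le> 1" by (metis order_refl zero_le_one)
        then show "u \<in> {p. incube p}" unfolding incube_def by simp
      qed
      show "(\<Sum>u\<in>S. D u *\<^sub>R u) = p" using h(2) xs(1) by (simp add: vec_eq_iff)
    qed
  qed
  then show ?thesis by blast
qed

lemma convex_cube: "convex {p :: real ^ 'n. incube p}"
  unfolding cube_eq by (rule convex_box)

lemma sampler_hyper:
  fixes F :: "(real ^ 'n) set set"
  assumes "finite F" "\<forall>h\<in>F. \<exists>a b. h = {x. a \<bullet> x = b}"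
  shows "\<exists>t. sampler ({p. incube p} \<inter> \<Inter>F) t"
  using assms
proof (induction F rule: finite_induct)
  case empty
  then show ?case using cube_sampler by simp
next
  case (insert h F)
  then obtain t where t: "sampler ({p. incube p} \<inter> \<Inter>F) t" by auto
  obtain a b where hab: "h = {x. a \<bullet> x = b}" using insert.prems by auto
  have cv: "convex ({p. incube p} \<inter> \<Inter>F)"
  proof (rule convex_Int[OF convex_cube convex_Inter])
    fix s assume "s \<in> F"
    then obtain a b where "s = {x. a \<bullet> x = b}" using insert.prems by auto
    then show "convex s" by (simp add: convex_hyperplane)
  qed
  have "sampler (({p. incube p} \<inter> \<Inter>F) \<inter> {x. a \<bullet> x = b}) (stepT a b (Cb a b) t)"
    by (rule sampler_step[OF t cv])
  moreover have "({p. incube p} \<inter> \<Inter>F) \<inter> {x. a \<bullet> x = b} = {p. incube p} \<inter> \<Inter>(insert h F)"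
    using hab by auto
  ultimately show ?case by auto
qed

lemma sampler_affine:
  fixes K :: "(real ^ 'n) set"
  assumes "affine K"
  shows "\<exists>t. sampler ({p. incube p} \<inter> K) t"
proof -
  obtain F where F: "finite F" "affine hull K = \<Inter>F" "\<And>h. h \<in> F \<Longrightarrow> \<exists>a b. a \<noteq> 0 \<and> h = {x. a \<bullet> x = b}"
    using affine_hull_finite_intersection_hyperplanes[of K] by metis
  have "affine hull K = K" using assms by (simp add: affine_hull_eq)
  then have "K = \<Inter>F" using F(2) by simp
  moreover have "\<exists>t. sampler ({p. incube p} \<inter> \<Inter>F) t"
    by (rule sampler_hyper[OF F(1)]) (use F(3) in blast)
  ultimately show ?thesis by simp
qed

fun cnode :: "('n, bool) gn \<Rightarrow> 'n bf_node" where
  "cnode (GC i) = Coin i" | "cnode (GK c) = Const c" | "cnode (GL b) = Leaf b"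

definition conv :: "('n, bool) gt \<Rightarrow> 'n bf_tree" where
  "conv t = (\<lambda>w. cnode (t w))"

lemma is_internal_cnode[simp]: "is_internal (cnode x) = gint x"
  by (cases x) (auto simp: is_internal_def gint_def)

lemma reached_conv: "reached (conv t) w = greached t w"
  by (simp add: reached_def greached_def conv_def)

lemma coin_prob_cnode[simp]: "coin_prob p (cnode x) = gcp p x"
  by (cases x) auto

lemma path_prob_conv: "path_prob (conv t) p = gpp t p"
  by (simp add: path_prob_def gpp_def conv_def fun_eq_iff)

lemma cnode_Leaf: "cnode x = Leaf b \<longleftrightarrow> x = GL b"
  by (cases x) auto

lemma cnode_Const: "cnode x = Const c \<longleftrightarrow> x = GK c"
  by (cases x) auto

lemma leaf_paths_conv: "leaf_paths (conv t) b = glv t b"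
  unfolding leaf_paths_def glv_def reached_conv by (simp add: conv_def cnode_Leaf)

lemma wf_factory_conv: "wf_factory (conv t) = gwf t"
  unfolding wf_factory_def gwf_def reached_conv by (simp add: conv_def cnode_Const)

lemma gleaves_bool: "gleaves (t :: ('n, bool) gt) = glv t True \<union> glv t False"
proof (intro set_eqI iffI)
  fix w assume "w \<in> gleaves t"
  then show "w \<in> glv t True \<union> glv t False"
    using gleaves_glv[of w t] by (cases "glab t w") auto
qed (auto dest: glv_subD)


theorem theorem4:
  fixes K :: "(real ^ 'n) set"
  assumes "affine K"
  shows "\<exists>T. comb_factory ({p. \<forall>i. 0 \<le> p $ i \<and> p $ i \<le> 1} \<inter> K) T"
proof -
  define P where "P = {p :: real ^ 'n. \<forall>i. 0 \<le> p $ i \<and> p $ i \<le> 1} \<inter> K"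
  have P': "P = {p. incube p} \<inter> K" by (simp add: P_def incube_def)
  obtain t where smp: "sampler P t" using sampler_affine[OF assms] P' by auto
  have wt: "gwf t" using smp by (simp add: sampler_def)
  define V where "V = vertices P"
  have V: "V = {v. v extreme_point_of P}" by (simp add: V_def vertices_def)
  have polyP: "polyhedron P" unfolding P' cube_eq
    by (intro polyhedron_Int polyhedron_interval affine_imp_polyhedron assms)
  have finV: "finite V" using finite_polyhedron_extreme_points[OF polyP] V by simp
  have compP: "compact P" unfolding P' cube_eq
    by (rule compact_Int_closed[OF compact_cbox affine_closed[OF assms]])
  have convP: "convex P" unfolding P' cube_eq
    by (rule convex_Int[OF convex_box(1) affine_imp_convex[OF assms]])
  have hull: "P = convex hull V" using Krein_Milman_Minkowski[OF compP convP] V by simp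
  have ex_lam: "\<exists>u. (\<forall>x\<in>V. 0 \<le> u x) \<and> sum u V = 1 \<and> (\<Sum>x\<in>V. u x *\<^sub>R x) = y" if "y \<in> P" for y
  proof -
    have "y \<in> convex hull V" using that hull by simp
    then show ?thesis unfolding convex_hull_finite[OF finV] by blast
  qed
  define lam where "lam y = (SOME u. (\<forall>x\<in>V. 0 \<le> u x) \<and> sum u V = 1 \<and> (\<Sum>x\<in>V. u x *\<^sub>R x) = y)" for y
  have lamP: "(\<forall>x\<in>V. 0 \<le> lam y x) \<and> sum (lam y) V = 1 \<and> (\<Sum>x\<in>V. lam y x *\<^sub>R x) = y" if "y \<in> P" for y
    unfolding lam_def by (rule someI_ex[OF ex_lam[OF that]])
  have lam01: "0 \<le> lam y v \<and> lam y v \<le> 1" if "y \<in> P" "v \<in> V" for y v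
  proof -
    have "lam y v \<le> sum (lam y) V"
      by (rule member_le_sum) (use that lamP[OF that(1)] finV in auto)
    then show ?thesis using lamP[OF that(1)] that(2) by auto
  qed
  define Bv where "Bv v y b = (if b = True then lam y v else 0) + (if b = False then 1 - lam y v else 0)" for v y b
  define tv where "tv v = gbind t (\<lambda>y. gbern (lam y v) True False)" for v
  define T where "T v = conv (tv v)" for v
  define f where "f v p = infsum (gpp (tv v) p) (glv (tv v) True)" for v p
  have gwf_tv: "gwf (tv v)" for v unfolding tv_def by (intro gwf_gbind wt gwf_gbern)
  have key: "\<exists>S D. (\<forall>u\<in>S. D u \<noteq> 0 \<longrightarrow> u \<in> P) \<and> finite S \<and> (\<Sum>u\<in>S. D u) = 1 \<and> (\<Sum>u\<in>S. D u *\<^sub>R u) = p \<and>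
      (\<forall>v\<in>V. realizes (tv v) p (\<Union>y\<in>{y\<in>S. D y \<noteq> 0}. {True, False}) (\<lambda>b. \<Sum>y\<in>S. D y * Bv v y b))"
    if pP: "p \<in> P" for p
  proof -
    have pc: "incube p" using smp pP by (simp add: sampler_def)
    from smp pP obtain S D where r: "realizes t p S D" and supp: "\<forall>u\<in>S. D u \<noteq> 0 \<longrightarrow> u \<in> P"
      and mean: "(\<Sum>u\<in>S. D u *\<^sub>R u) = p" unfolding sampler_def by blast
    have rv: "realizes (tv v) p (\<Union>y\<in>{y\<in>S. D y \<noteq> 0}. {True, False}) (\<lambda>b. \<Sum>y\<in>S. D y * Bv v y b)"
      if v: "v \<in> V" for v
      unfolding tv_def Bv_def
    proof (rule realizes_gbind[OF pc wt _ r])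
      show "gwf (gbern (lam y v) True False)" for y by (rule gwf_gbern)
      show "realizes (gbern (lam y v) True False) p {True, False}
          (\<lambda>b. (if b = True then lam y v else 0) + (if b = False then 1 - lam y v else 0))"
        if "y \<in> S" "D y \<noteq> 0" for y
        using lam01[OF _ v, of y] supp that by (intro realizes_gbern) auto
    qed
    have finS: "finite S" using r by (simp add: realizes_def)
    show ?thesis
      by (intro exI[of _ S] exI[of _ D] conjI ballI supp finS realizes_sum1[OF r pc wt] mean rv)
  qed
  have fval: "f v p = (\<Sum>y\<in>S. D y * lam y v)"
    if "v \<in> V" "realizes (tv v) p S' (\<lambda>b. \<Sum>y\<in>S. D y * Bv v y b)" for v p S S' D
  proof -
    have "(gpp (tv v) p has_sum (\<Sum>y\<in>S. D y * Bv v y True)) (glv (tv v) True)"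
      using that(2) by (simp add: realizes_def)
    then have "f v p = (\<Sum>y\<in>S. D y * Bv v y True)" unfolding f_def by (rule infsumI)
    then show ?thesis by (simp add: Bv_def)
  qed
  have "comb_factory P T"
    unfolding comb_factory_def V_def[symmetric]
  proof (intro exI[of _ f] conjI ballI)
    fix v assume v: "v \<in> V"
    show "wf_factory (T v)" unfolding T_def wf_factory_conv by (rule gwf_tv)
    show "implements (T v) (f v) P"
      unfolding implements_def T_def leaf_paths_conv path_prob_conv
    proof (intro ballI conjI)
      fix p assume pP: "p \<in> P"
      obtain S D where SD: "(\<forall>u\<in>S. D u \<noteq> 0 \<longrightarrow> u \<in> P)" "finite S" "(\<Sum>u\<in>S. D u) = 1" "(\<Sum>u\<in>S. D u *\<^sub>R u) = p"
        "\<forall>v\<in>V. realizes (tv v) p (\<Union>y\<in>{y\<in>S. D y \<noteq> 0}. {True, False}) (\<lambda>b. \<Sum>y\<in>S. D y * Bv v y b)"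
        using key[OF pP] by blast
      have rv: "realizes (tv v) p (\<Union>y\<in>{y\<in>S. D y \<noteq> 0}. {True, False}) (\<lambda>b. \<Sum>y\<in>S. D y * Bv v y b)"
        using SD(5) v by blast
      show "(gpp (tv v) p has_sum 1) (glv (tv v) True \<union> glv (tv v) False)"
        using rv unfolding gleaves_bool[symmetric] by (simp add: realizes_def)
      have "(gpp (tv v) p has_sum (\<Sum>y\<in>S. D y * Bv v y True)) (glv (tv v) True)"
        using rv by (simp add: realizes_def)
      then show "(gpp (tv v) p has_sum f v p) (glv (tv v) True)"
        using fval[OF v rv] by (simp add: Bv_def)
    qed
  next
    fix p assume pP: "p \<in> P"
    obtain S D where SD: "(\<forall>u\<in>S. D u \<noteq> 0 \<longrightarrow> u \<in> P)" "finite S" "(\<Sum>u\<in>S. D u) = 1" "(\<Sum>u\<in>S. D u *\<^sub>R u) = p"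
      "\<forall>v\<in>V. realizes (tv v) p (\<Union>y\<in>{y\<in>S. D y \<noteq> 0}. {True, False}) (\<lambda>b. \<Sum>y\<in>S. D y * Bv v y b)"
      using key[OF pP] by blast
    have fv: "f v p = (\<Sum>y\<in>S. D y * lam y v)" if "v \<in> V" for v
      using fval[OF that] SD(5) that by blast
    show "(\<Sum>v\<in>V. f v p) = 1"
    proof -
      have "(\<Sum>v\<in>V. f v p) = (\<Sum>v\<in>V. \<Sum>y\<in>S. D y * lam y v)" by (rule sum.cong) (simp_all add: fv)
      also have "\<dots> = (\<Sum>y\<in>S. D y * (\<Sum>v\<in>V. lam y v))" by (simp add: sum.swap[of _ V] sum_distrib_left)
      also have "\<dots> = (\<Sum>y\<in>S. D y)"
      proof (rule sum.cong[OF refl])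
        fix y assume "y \<in> S"
        then show "D y * (\<Sum>v\<in>V. lam y v) = D y" using SD(1) lamP by (cases "D y = 0") auto
      qed
      finally show ?thesis using SD(3) by simp
    qed
    show "(\<Sum>v\<in>V. f v p *\<^sub>R v) = p"
    proof -
      have "(\<Sum>v\<in>V. f v p *\<^sub>R v) = (\<Sum>v\<in>V. (\<Sum>y\<in>S. D y * lam y v) *\<^sub>R v)" by (rule sum.cong) (simp_all add: fv)
      also have "\<dots> = (\<Sum>y\<in>S. D y *\<^sub>R (\<Sum>v\<in>V. lam y v *\<^sub>R v))" by (rule swap_mean)
      also have "\<dots> = (\<Sum>y\<in>S. D y *\<^sub>R y)"
      proof (rule sum.cong[OF refl])
        fix y assume "y \<in> S"
        then show "D y *\<^sub>R (\<Sum>v\<in>V. lam y v *\<^sub>R v) = D y *\<^sub>R y" using SD(1) lamP by (cases "D y = 0") auto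
      qed
      finally show ?thesis using SD(4) by simp
    qed
  qed
  then show ?thesis unfolding P_def by blast
qed

end
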